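(* Let $d_2,d_3\ge 2$ and $d_1=d_2d_3-1$. Then the SLOCC maximal states of $\mathbb{C}^{d_1}\otimes\mathbb{C}^{d_2}\otimes\mathbb{C}^{d_3}$ fall into exactly $\min\{d_2,d_3\}$ SLOCC equivalence classes.
   Context: $|\psi\rangle\le_{\mathrm{SLOCC}}|\phi\rangle$ means $(L_1\otimes L_2\otimes L_3)|\phi\rangle=|\psi\rangle$ for some linear operators $L_i$ on $\mathbb{C}^{d_i}$; two states are SLOCC equivalent if each is $\le_{\mathrm{SLOCC}}$ the other (equivalently, they are related by $L_1\otimes L_2\otimes L_3$ with all $L_i$ invertible). A state $|\phi\rangle$ is SLOCC maximal if for every $|\psi\rangle$ in the space, $|\phi\rangle\le_{\mathrm{SLOCC}}|\psi\rangle$ implies $|\psi\rangle\le_{\mathrm{SLOCC}}|\phi\rangle$. *)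

theory Defs
  imports Complex_Main
begin

text \<open>A vector of C^{d1} (x) C^{d2} (x) C^{d3} is represented by its coefficient array
  T i j k (i < d1, j < d2, k < d3), with all entries outside the index box equal to 0.
  A linear operator on C^d is represented by its d x d matrix L a i (a, i < d).\<close>

definition tensor3 :: "nat \<Rightarrow> nat \<Rightarrow> nat \<Rightarrow> (nat \<Rightarrow> nat \<Rightarrow> nat \<Rightarrow> complex) set" where
  "tensor3 d1 d2 d3 = {T. \<forall>i j k. \<not> (i < d1 \<and> j < d2 \<and> k < d3) \<longrightarrow> T i j k = 0}"

definition local_op ::
  "nat \<Rightarrow> nat \<Rightarrow> nat \<Rightarrow> (nat \<Rightarrow> nat \<Rightarrow> complex) \<Rightarrow> (nat \<Rightarrow> nat \<Rightarrow> complex) \<Rightarrow>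
   (nat \<Rightarrow> nat \<Rightarrow> complex) \<Rightarrow> (nat \<Rightarrow> nat \<Rightarrow> nat \<Rightarrow> complex) \<Rightarrow> (nat \<Rightarrow> nat \<Rightarrow> nat \<Rightarrow> complex)" where
  "local_op d1 d2 d3 L1 L2 L3 T = (\<lambda>a b c.
     if a < d1 \<and> b < d2 \<and> c < d3 then
       (\<Sum>i<d1. \<Sum>j<d2. \<Sum>k<d3. L1 a i * L2 b j * L3 c k * T i j k)
     else 0)"

definition slocc_le ::
  "nat \<Rightarrow> nat \<Rightarrow> nat \<Rightarrow> (nat \<Rightarrow> nat \<Rightarrow> nat \<Rightarrow> complex) \<Rightarrow> (nat \<Rightarrow> nat \<Rightarrow> nat \<Rightarrow> complex) \<Rightarrow> bool" where
  "slocc_le d1 d2 d3 \<psi> \<phi> \<longleftrightarrow> (\<exists>L1 L2 L3. local_op d1 d2 d3 L1 L2 L3 \<phi> = \<psi>)"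

definition slocc_equiv ::
  "nat \<Rightarrow> nat \<Rightarrow> nat \<Rightarrow> (nat \<Rightarrow> nat \<Rightarrow> nat \<Rightarrow> complex) \<Rightarrow> (nat \<Rightarrow> nat \<Rightarrow> nat \<Rightarrow> complex) \<Rightarrow> bool" where
  "slocc_equiv d1 d2 d3 \<psi> \<phi> \<longleftrightarrow> slocc_le d1 d2 d3 \<psi> \<phi> \<and> slocc_le d1 d2 d3 \<phi> \<psi>"

definition slocc_maximal ::
  "nat \<Rightarrow> nat \<Rightarrow> nat \<Rightarrow> (nat \<Rightarrow> nat \<Rightarrow> nat \<Rightarrow> complex) \<Rightarrow> bool" where
  "slocc_maximal d1 d2 d3 \<phi> \<longleftrightarrow> \<phi> \<in> tensor3 d1 d2 d3 \<and>
     (\<forall>\<psi>\<in>tensor3 d1 d2 d3. slocc_le d1 d2 d3 \<phi> \<psi> \<longrightarrow> slocc_le d1 d2 d3 \<psi> \<phi>)"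

definition maximal_states :: "nat \<Rightarrow> nat \<Rightarrow> nat \<Rightarrow> (nat \<Rightarrow> nat \<Rightarrow> nat \<Rightarrow> complex) set" where
  "maximal_states d1 d2 d3 = {\<phi>. slocc_maximal d1 d2 d3 \<phi>}"

definition slocc_equiv_rel ::
  "nat \<Rightarrow> nat \<Rightarrow> nat \<Rightarrow> ((nat \<Rightarrow> nat \<Rightarrow> nat \<Rightarrow> complex) \<times> (nat \<Rightarrow> nat \<Rightarrow> nat \<Rightarrow> complex)) set" where
  "slocc_equiv_rel d1 d2 d3 = {(\<phi>, \<psi>). \<phi> \<in> maximal_states d1 d2 d3 \<and> \<psi> \<in> maximal_states d1 d2 d3 \<and>
      slocc_equiv d1 d2 d3 \<phi> \<psi>}"

end

theory Submission
  imports Defs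
begin

definition dlt :: "nat \<Rightarrow> nat \<Rightarrow> complex" where "dlt i j = (if i = j then 1 else 0)"
definition mm :: "nat \<Rightarrow> (nat\<Rightarrow>nat\<Rightarrow>complex) \<Rightarrow> (nat\<Rightarrow>nat\<Rightarrow>complex) \<Rightarrow> nat\<Rightarrow>nat\<Rightarrow>complex"
  where "mm d A B = (\<lambda>i j. \<Sum>k<d. A i k * B k j)"
definition isinv :: "nat \<Rightarrow> (nat\<Rightarrow>nat\<Rightarrow>complex) \<Rightarrow> (nat\<Rightarrow>nat\<Rightarrow>complex) \<Rightarrow> bool" where
  "isinv d A A' \<longleftrightarrow> (\<forall>i<d. \<forall>j<d. mm d A A' i j = dlt i j \<and> mm d A' A i j = dlt i j)"

lemma hom_exists:
  fixes B :: "nat \<Rightarrow> nat \<Rightarrow> complex"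
  assumes "m < n"
  shows "\<exists>v. (\<exists>k<n. v k \<noteq> 0) \<and> (\<forall>i<m. (\<Sum>k<n. B i k * v k) = 0)"
  using assms
proof (induction m arbitrary: n B)
  case 0
  then show ?case by (rule_tac x="\<lambda>k. 1" in exI) auto
next
  case (Suc m)
  then obtain n' where n': "n = Suc n'" and mn: "m < n'" by (cases n) auto
  show ?case
  proof (cases "\<forall>i<Suc m. B i n' = 0")
    case True
    show ?thesis
      by (rule_tac x="\<lambda>k. if k = n' then 1 else 0" in exI) (auto simp: n' True if_distrib cong: if_cong)
  next
    case False
    then obtain i0 where i0: "i0 < Suc m" "B i0 n' \<noteq> 0" by auto
    define \<sigma> where "\<sigma> i = (if i = i0 then m else i)" for i
    define B2 where "B2 i k = B (\<sigma> i) k - B (\<sigma> i) n' / B i0 n' * B i0 k" for i k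
    obtain w where w1: "\<exists>k<n'. w k \<noteq> 0" and w2: "\<forall>i<m. (\<Sum>k<n'. B2 i k * w k) = 0"
      using Suc.IH[OF mn, of B2] by blast
    define S0 where "S0 = (\<Sum>k<n'. B i0 k * w k)"
    define v where "v k = (if k < n' then w k else if k = n' then - S0 / B i0 n' else 0)" for k
    have sumv: "(\<Sum>k<n. B i k * v k) = (\<Sum>k<n'. B i k * w k) + B i n' * (- S0 / B i0 n')" for i
      by (simp add: n' v_def)
    have "(\<Sum>k<n. B i k * v k) = 0" if i: "i < Suc m" for i
    proof (cases "i = i0")
      case True
      then show ?thesis using sumv[of i] i0 by (simp add: S0_def)
    next
      case False
      define i' where "i' = (if i = m then i0 else i)"
      have i'm: "i' < m" using False i i0 unfolding i'_def by auto
      have si: "\<sigma> i' = i" using False unfolding i'_def \<sigma>_def by auto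
      have "0 = (\<Sum>k<n'. B2 i' k * w k)" using w2 i'm by simp
      also have "\<dots> = (\<Sum>k<n'. B i k * w k - B i n' / B i0 n' * (B i0 k * w k))"
        unfolding B2_def si by (rule sum.cong) (auto simp: algebra_simps)
      also have "\<dots> = (\<Sum>k<n'. B i k * w k) - B i n' / B i0 n' * S0"
        by (simp add: sum_subtractf sum_distrib_left S0_def)
      finally show ?thesis using sumv[of i] by (simp add: field_simps)
    qed
    moreover have "\<exists>k<n. v k \<noteq> 0" using w1 by (auto simp: v_def n')
    ultimately show ?thesis by blast
  qed
qed

lemma mm_assoc: "mm d (mm e A B) C = mm e A (mm d B C)"
  unfolding mm_def
  by (auto simp: sum_distrib_left sum_distrib_right mult.assoc intro!: ext sum.swap)

lemma dlt_mult_l: "dlt i k * x = (if k = i then x else 0)" by (simp add: dlt_def)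
lemma dlt_mult_r: "x * dlt k i = (if k = i then x else 0)" by (simp add: dlt_def)
lemma mm_dlt_left: "i < d \<Longrightarrow> mm d dlt B i j = B i j"
  unfolding mm_def by (simp add: dlt_mult_l)
lemma mm_dlt_right: "j < d \<Longrightarrow> mm d A dlt i j = A i j"
  unfolding mm_def by (simp add: dlt_mult_r)
lemma sum_dlt_left: "i < d \<Longrightarrow> (\<Sum>k<d. dlt i k * f k) = f i"
  by (simp add: dlt_mult_l)
lemma sum_dlt_right: "i < d \<Longrightarrow> (\<Sum>k<d. f k * dlt k i) = f i"
  by (simp add: dlt_mult_r)

lemma right_inv:
  fixes A :: "nat \<Rightarrow> nat \<Rightarrow> complex"
  assumes ker: "\<And>v. (\<forall>i<d. (\<Sum>k<d. A i k * v k) = 0) \<Longrightarrow> (\<forall>k<d. v k = 0)"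
  shows "\<exists>R. \<forall>i<d. \<forall>j<d. mm d A R i j = dlt i j"
proof -
  have "\<exists>x. \<forall>j<d. (\<Sum>k<d. A j k * x k) = dlt j i" if i: "i < d" for i
  proof -
    define C where "C j k = (if k < d then A j k else dlt j i)" for j k
    obtain v where v1: "\<exists>k<Suc d. v k \<noteq> 0" and v2: "\<forall>j<d. (\<Sum>k<Suc d. C j k * v k) = 0"
      using hom_exists[of d "Suc d" C] by auto
    have v2': "(\<Sum>k<d. A j k * v k) + dlt j i * v d = 0" if "j < d" for j
      using v2 that by (simp add: C_def)
    have vd: "v d \<noteq> 0"
    proof
      assume "v d = 0"
      then have "\<forall>k<d. v k = 0" using ker[of v] v2' by auto
      with v1 \<open>v d = 0\<close> show False by (metis less_Suc_eq)
    qed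
    show ?thesis
    proof (rule exI[of _ "\<lambda>k. - v k / v d"], intro allI impI)
      fix j assume j: "j < d"
      have "(\<Sum>k<d. A j k * (- v k / v d)) = - (\<Sum>k<d. A j k * v k) / v d"
        by (simp add: sum_divide_distrib sum_negf)
      also have "\<dots> = dlt j i"
      proof -
        have "(\<Sum>k<d. A j k * v k) = - (dlt j i * v d)" using v2'[OF j] by (simp add: eq_neg_iff_add_eq_0)
        then show ?thesis using vd by simp
      qed
      finally show "(\<Sum>k<d. A j k * (- v k / v d)) = dlt j i" .
    qed
  qed
  then obtain X where X: "\<forall>i<d. \<forall>j<d. (\<Sum>k<d. A j k * X i k) = dlt j i" by metis
  show ?thesis by (rule exI[of _ "\<lambda>k i. X i k"]) (auto simp: mm_def X)
qed

lemma inv_from_ker: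
  fixes A :: "nat \<Rightarrow> nat \<Rightarrow> complex"
  assumes ker: "\<And>v. (\<forall>i<d. (\<Sum>k<d. A i k * v k) = 0) \<Longrightarrow> (\<forall>k<d. v k = 0)"
  shows "\<exists>A'. isinv d A A'"
proof -
  obtain R where R: "\<forall>i<d. \<forall>j<d. mm d A R i j = dlt i j" using right_inv[OF ker] by blast
  have kerR: "\<forall>k<d. v k = 0" if h: "\<forall>i<d. (\<Sum>k<d. R i k * v k) = 0" for v
  proof (intro allI impI)
    fix j assume j: "j < d"
    have "v j = (\<Sum>i<d. dlt j i * v i)" using j by (simp add: sum_dlt_left)
    also have "\<dots> = (\<Sum>i<d. mm d A R j i * v i)" using R j by auto
    also have "\<dots> = (\<Sum>k<d. A j k * (\<Sum>i<d. R k i * v i))"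
      unfolding mm_def by (simp add: sum_distrib_left sum_distrib_right mult.assoc) (rule sum.swap)
    also have "\<dots> = 0" using h by simp
    finally show "v j = 0" .
  qed
  obtain S where S: "\<forall>i<d. \<forall>j<d. mm d R S i j = dlt i j" using right_inv[of d R] kerR by blast
  have AS: "A i j = S i j" if "i < d" "j < d" for i j
  proof -
    have "mm d A (mm d R S) i j = mm d A dlt i j"
      using that S unfolding mm_def by (intro sum.cong) auto
    then have "A i j = mm d A (mm d R S) i j" using that by (simp add: mm_dlt_right)
    also have "\<dots> = mm d (mm d A R) S i j" by (simp add: mm_assoc)
    also have "\<dots> = mm d dlt S i j"
      using that R unfolding mm_def by (intro sum.cong) auto
    also have "\<dots> = S i j" using that by (simp add: mm_dlt_left)
    finally show ?thesis .
  qed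
  have "mm d R A i j = dlt i j" if "i < d" "j < d" for i j
  proof -
    have "mm d R A i j = mm d R S i j" unfolding mm_def using AS that by (auto intro!: sum.cong)
    then show ?thesis using S that by simp
  qed
  then show ?thesis using R unfolding isinv_def by blast
qed

lemma swap13: "(\<Sum>x\<in>X. \<Sum>i\<in>I. \<Sum>j\<in>J. \<Sum>k\<in>K. F x i j k) = (\<Sum>i\<in>I. \<Sum>j\<in>J. \<Sum>k\<in>K. \<Sum>x\<in>X. F x i j k)"
  apply (rule trans[OF sum.swap]) apply (rule sum.cong[OF refl])
  apply (rule trans[OF sum.swap]) apply (rule sum.cong[OF refl])
  apply (rule sum.swap) done

lemma swap_in2: "(\<Sum>x\<in>X. \<Sum>y\<in>Y. \<Sum>i\<in>I. F x y i) = (\<Sum>i\<in>I. \<Sum>x\<in>X. \<Sum>y\<in>Y. F x y i)"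
proof -
  have "(\<Sum>x\<in>X. \<Sum>y\<in>Y. \<Sum>i\<in>I. F x y i) = (\<Sum>x\<in>X. \<Sum>i\<in>I. \<Sum>y\<in>Y. F x y i)"
    by (intro sum.cong refl sum.swap)
  also have "\<dots> = (\<Sum>i\<in>I. \<Sum>x\<in>X. \<Sum>y\<in>Y. F x y i)" by (rule sum.swap)
  finally show ?thesis .
qed

lemma swap22: "(\<Sum>a\<in>A. \<Sum>b\<in>B. \<Sum>c\<in>C. \<Sum>d\<in>D. F a b c d) = (\<Sum>c\<in>C. \<Sum>d\<in>D. \<Sum>a\<in>A. \<Sum>b\<in>B. F a b c d)"
  by (subst swap_in2) (intro sum.cong refl swap_in2)

lemma swap33: "(\<Sum>x\<in>X. \<Sum>y\<in>Y. \<Sum>z\<in>Z. \<Sum>i\<in>I. \<Sum>j\<in>J. \<Sum>k\<in>K. F x y z i j k) =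
   (\<Sum>i\<in>I. \<Sum>j\<in>J. \<Sum>k\<in>K. \<Sum>x\<in>X. \<Sum>y\<in>Y. \<Sum>z\<in>Z. F x y z i j k)"
proof -
  have "(\<Sum>x\<in>X. \<Sum>y\<in>Y. \<Sum>z\<in>Z. \<Sum>i\<in>I. \<Sum>j\<in>J. \<Sum>k\<in>K. F x y z i j k) =
        (\<Sum>x\<in>X. \<Sum>y\<in>Y. \<Sum>i\<in>I. \<Sum>j\<in>J. \<Sum>k\<in>K. \<Sum>z\<in>Z. F x y z i j k)"
    by (intro sum.cong refl swap13)
  also have "\<dots> = (\<Sum>x\<in>X. \<Sum>i\<in>I. \<Sum>j\<in>J. \<Sum>k\<in>K. \<Sum>y\<in>Y. \<Sum>z\<in>Z. F x y z i j k)"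
    by (intro sum.cong refl swap13)
  also have "\<dots> = (\<Sum>i\<in>I. \<Sum>j\<in>J. \<Sum>k\<in>K. \<Sum>x\<in>X. \<Sum>y\<in>Y. \<Sum>z\<in>Z. F x y z i j k)"
    by (rule swap13)
  finally show ?thesis .
qed

lemma prod3_sum:
  fixes f g h :: "nat \<Rightarrow> complex"
  shows "(\<Sum>i\<in>I. f i) * (\<Sum>j\<in>J. g j) * (\<Sum>k\<in>K. h k) * t = (\<Sum>i\<in>I. \<Sum>j\<in>J. \<Sum>k\<in>K. f i * g j * h k * t)"
proof -
  have "(\<Sum>i\<in>I. \<Sum>j\<in>J. \<Sum>k\<in>K. f i * g j * h k * t) = (\<Sum>i\<in>I. f i * (\<Sum>j\<in>J. g j * (\<Sum>k\<in>K. h k * t)))"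
    by (simp add: sum_distrib_left mult.assoc)
  also have "\<dots> = (\<Sum>i\<in>I. f i * (\<Sum>j\<in>J. g j * ((\<Sum>k\<in>K. h k) * t)))"
    by (simp add: sum_distrib_right)
  also have "\<dots> = (\<Sum>i\<in>I. f i * ((\<Sum>j\<in>J. g j) * ((\<Sum>k\<in>K. h k) * t)))"
    by (simp add: sum_distrib_right mult.assoc)
  also have "\<dots> = (\<Sum>i\<in>I. f i) * ((\<Sum>j\<in>J. g j) * ((\<Sum>k\<in>K. h k) * t))"
    by (simp add: sum_distrib_right)
  finally show ?thesis by (simp add: mult.assoc)
qed

lemma prod2_sum:
  fixes f g :: "nat \<Rightarrow> complex"
  shows "(\<Sum>i\<in>I. f i) * (\<Sum>j\<in>J. g j) * t = (\<Sum>i\<in>I. \<Sum>j\<in>J. f i * g j * t)"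
proof -
  have "(\<Sum>i\<in>I. \<Sum>j\<in>J. f i * g j * t) = (\<Sum>i\<in>I. f i * (\<Sum>j\<in>J. g j * t))"
    by (simp add: sum_distrib_left mult.assoc)
  also have "\<dots> = (\<Sum>i\<in>I. f i * ((\<Sum>j\<in>J. g j) * t))"
    by (simp add: sum_distrib_right)
  also have "\<dots> = (\<Sum>i\<in>I. f i) * ((\<Sum>j\<in>J. g j) * t)"
    by (simp add: sum_distrib_right)
  finally show ?thesis by (simp add: mult.assoc)
qed

lemma local_op_comp:
  "local_op d1 d2 d3 A B C (local_op d1 d2 d3 A' B' C' T) =
   local_op d1 d2 d3 (mm d1 A A') (mm d2 B B') (mm d3 C C') T"
proof (intro ext)
  fix a b c
  show "local_op d1 d2 d3 A B C (local_op d1 d2 d3 A' B' C' T) a b c =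
   local_op d1 d2 d3 (mm d1 A A') (mm d2 B B') (mm d3 C C') T a b c"
  proof (cases "a < d1 \<and> b < d2 \<and> c < d3")
    case False then show ?thesis unfolding local_op_def by (simp only: if_not_P if_False)
  next
    case True
    have "local_op d1 d2 d3 A B C (local_op d1 d2 d3 A' B' C' T) a b c =
      (\<Sum>i<d1. \<Sum>j<d2. \<Sum>k<d3. A a i * B b j * C c k *
         (\<Sum>i'<d1. \<Sum>j'<d2. \<Sum>k'<d3. A' i i' * B' j j' * C' k k' * T i' j' k'))"
      using True unfolding local_op_def by (auto intro!: sum.cong)
    also have "\<dots> = (\<Sum>i<d1. \<Sum>j<d2. \<Sum>k<d3.
         (\<Sum>i'<d1. \<Sum>j'<d2. \<Sum>k'<d3. A a i * A' i i' * (B b j * B' j j') * (C c k * C' k k') * T i' j' k'))"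
      by (simp add: sum_distrib_left mult_ac)
    also have "\<dots> = (\<Sum>i'<d1. \<Sum>j'<d2. \<Sum>k'<d3.
         (\<Sum>i<d1. \<Sum>j<d2. \<Sum>k<d3. A a i * A' i i' * (B b j * B' j j') * (C c k * C' k k') * T i' j' k'))"
      by (rule swap33)
    also have "\<dots> = (\<Sum>i'<d1. \<Sum>j'<d2. \<Sum>k'<d3. mm d1 A A' a i' * mm d2 B B' b j' * mm d3 C C' c k' * T i' j' k')"
      unfolding mm_def by (intro sum.cong refl) (simp only: prod3_sum)
    also have "\<dots> = local_op d1 d2 d3 (mm d1 A A') (mm d2 B B') (mm d3 C C') T a b c"
      using True by (simp add: local_op_def)
    finally show ?thesis .
  qed
qed

lemma local_op_cong:
  assumes "\<And>i j. i < d1 \<Longrightarrow> j < d1 \<Longrightarrow> A i j = A' i j"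
    "\<And>i j. i < d2 \<Longrightarrow> j < d2 \<Longrightarrow> B i j = B' i j"
    "\<And>i j. i < d3 \<Longrightarrow> j < d3 \<Longrightarrow> C i j = C' i j"
  shows "local_op d1 d2 d3 A B C T = local_op d1 d2 d3 A' B' C' T"
  unfolding local_op_def using assms by (auto intro!: ext sum.cong)

lemma local_op_id:
  assumes "T \<in> tensor3 d1 d2 d3"
  shows "local_op d1 d2 d3 dlt dlt dlt T = T"
proof (intro ext)
  fix a b c
  show "local_op d1 d2 d3 dlt dlt dlt T a b c = T a b c"
  proof (cases "a < d1 \<and> b < d2 \<and> c < d3")
    case False then show ?thesis using assms by (auto simp: local_op_def tensor3_def)
  next
    case True
    then show ?thesis by (simp add: local_op_def mult.assoc sum_distrib_left[symmetric] sum_dlt_left)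
  qed
qed

lemma local_op_tensor3: "local_op d1 d2 d3 A B C T \<in> tensor3 d1 d2 d3"
  by (simp add: local_op_def tensor3_def)

lemma slocc_le_trans:
  "slocc_le d1 d2 d3 x y \<Longrightarrow> slocc_le d1 d2 d3 y z \<Longrightarrow> slocc_le d1 d2 d3 x z"
  unfolding slocc_le_def by (metis local_op_comp)

lemma slocc_le_refl: "T \<in> tensor3 d1 d2 d3 \<Longrightarrow> slocc_le d1 d2 d3 T T"
  unfolding slocc_le_def using local_op_id by blast

lemma slocc_le_tensor3: "slocc_le d1 d2 d3 x y \<Longrightarrow> x \<in> tensor3 d1 d2 d3"
  unfolding slocc_le_def using local_op_tensor3 by blast

definition SP :: "nat \<Rightarrow> (nat\<Rightarrow>nat\<Rightarrow>nat\<Rightarrow>complex) \<Rightarrow> (nat\<Rightarrow>nat\<Rightarrow>complex) set" where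
  "SP d1 \<phi> = {X. \<exists>c. X = (\<lambda>j k. \<Sum>i<d1. c i * \<phi> i j k)}"
definition inbox :: "nat \<Rightarrow> nat \<Rightarrow> (nat\<Rightarrow>nat\<Rightarrow>complex) \<Rightarrow> bool" where
  "inbox d2 d3 X \<longleftrightarrow> (\<forall>j k. \<not>(j<d2 \<and> k<d3) \<longrightarrow> X j k = 0)"
definition ip :: "nat \<Rightarrow> nat \<Rightarrow> (nat\<Rightarrow>nat\<Rightarrow>complex) \<Rightarrow> (nat\<Rightarrow>nat\<Rightarrow>complex) \<Rightarrow> complex" where
  "ip d2 d3 M X = (\<Sum>j<d2. \<Sum>k<d3. M j k * X j k)"
definition Hyp :: "nat \<Rightarrow> nat \<Rightarrow> (nat\<Rightarrow>nat\<Rightarrow>complex) \<Rightarrow> (nat\<Rightarrow>nat\<Rightarrow>complex) set" where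
  "Hyp d2 d3 M = {X. inbox d2 d3 X \<and> ip d2 d3 M X = 0}"
definition gmap :: "nat \<Rightarrow> nat \<Rightarrow> (nat\<Rightarrow>nat\<Rightarrow>complex) \<Rightarrow> (nat\<Rightarrow>nat\<Rightarrow>complex) \<Rightarrow> (nat\<Rightarrow>nat\<Rightarrow>complex) \<Rightarrow> (nat\<Rightarrow>nat\<Rightarrow>complex)" where
  "gmap d2 d3 A B X = (\<lambda>j k. if j < d2 \<and> k < d3 then \<Sum>b<d2. \<Sum>c<d3. A j b * B k c * X b c else 0)"
definition gmapT :: "nat \<Rightarrow> nat \<Rightarrow> (nat\<Rightarrow>nat\<Rightarrow>complex) \<Rightarrow> (nat\<Rightarrow>nat\<Rightarrow>complex) \<Rightarrow> (nat\<Rightarrow>nat\<Rightarrow>complex) \<Rightarrow> (nat\<Rightarrow>nat\<Rightarrow>complex)" where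
  "gmapT d2 d3 A B M = (\<lambda>b c. \<Sum>j<d2. \<Sum>k<d3. A j b * B k c * M j k)"

lemma slice_local:
  assumes "a < d1"
  shows "local_op d1 d2 d3 L1 L2 L3 \<psi> a = (\<lambda>j k. \<Sum>i<d1. L1 a i * gmap d2 d3 L2 L3 (\<psi> i) j k)"
proof (intro ext)
  fix j k
  show "local_op d1 d2 d3 L1 L2 L3 \<psi> a j k = (\<Sum>i<d1. L1 a i * gmap d2 d3 L2 L3 (\<psi> i) j k)"
    using assms by (auto simp: local_op_def gmap_def sum_distrib_left mult.assoc)
qed

lemma gmap_lin:
  "gmap d2 d3 A B (\<lambda>j k. \<Sum>i<d1. c i * \<phi> i j k) = (\<lambda>j k. \<Sum>i<d1. c i * gmap d2 d3 A B (\<phi> i) j k)"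
proof (intro ext)
  fix j k
  show "gmap d2 d3 A B (\<lambda>j k. \<Sum>i<d1. c i * \<phi> i j k) j k = (\<Sum>i<d1. c i * gmap d2 d3 A B (\<phi> i) j k)"
  proof (cases "j < d2 \<and> k < d3")
    case True
    have "gmap d2 d3 A B (\<lambda>j k. \<Sum>i<d1. c i * \<phi> i j k) j k
       = (\<Sum>b<d2. \<Sum>c'<d3. \<Sum>i<d1. c i * (A j b * B k c' * \<phi> i b c'))"
      using True by (simp add: gmap_def sum_distrib_left mult_ac)
    also have "\<dots> = (\<Sum>i<d1. \<Sum>b<d2. \<Sum>c'<d3. c i * (A j b * B k c' * \<phi> i b c'))"
      by (rule swap_in2)
    also have "\<dots> = (\<Sum>i<d1. c i * gmap d2 d3 A B (\<phi> i) j k)"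
      using True by (simp add: gmap_def sum_distrib_left)
    finally show ?thesis .
  qed (auto simp: gmap_def)
qed

lemma SP_slice: "i < d1 \<Longrightarrow> \<phi> i \<in> SP d1 \<phi>"
  unfolding SP_def by (rule CollectI, rule exI[of _ "dlt i"]) (simp add: dlt_mult_l)

lemma SP_comb:
  assumes "\<forall>a<d1. X a \<in> SP d1 \<psi>"
  shows "(\<lambda>j k. \<Sum>a<d1. c a * X a j k) \<in> SP d1 \<psi>"
proof -
  have "\<forall>a\<in>{..<d1}. \<exists>c. X a = (\<lambda>j k. \<Sum>i<d1. c i * \<psi> i j k)"
    using assms unfolding SP_def by auto
  from bchoice[OF this] obtain C where C0: "\<forall>a\<in>{..<d1}. X a = (\<lambda>j k. \<Sum>i<d1. C a i * \<psi> i j k)"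
    by blast
  have C: "X a j k = (\<Sum>i<d1. C a i * \<psi> i j k)" if "a < d1" for a j k using C0 that by auto
  have "(\<lambda>j k. \<Sum>a<d1. c a * X a j k) = (\<lambda>j k. \<Sum>i<d1. (\<Sum>a<d1. c a * C a i) * \<psi> i j k)"
  proof (intro ext)
    fix j k
    have "(\<Sum>a<d1. c a * X a j k) = (\<Sum>a<d1. \<Sum>i<d1. c a * C a i * \<psi> i j k)"
      by (intro sum.cong refl) (simp add: C sum_distrib_left mult.assoc)
    also have "\<dots> = (\<Sum>i<d1. (\<Sum>a<d1. c a * C a i) * \<psi> i j k)"
      unfolding sum_distrib_right by (rule sum.swap)
    finally show "(\<Sum>a<d1. c a * X a j k) = (\<Sum>i<d1. (\<Sum>a<d1. c a * C a i) * \<psi> i j k)" .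
  qed
  then show ?thesis unfolding SP_def mem_Collect_eq by (rule exI[of _ "\<lambda>i. \<Sum>a<d1. c a * C a i"])
qed

lemma SP_sub:
  assumes "\<forall>a<d1. \<phi> a \<in> SP d1 \<psi>"
  shows "SP d1 \<phi> \<subseteq> SP d1 \<psi>"
  using SP_comb[OF assms] unfolding SP_def[of d1 \<phi>] by auto

lemma SP_add:
  assumes "X \<in> SP d1 \<psi>" "Y \<in> SP d1 \<psi>"
  shows "(\<lambda>j k. X j k + t * Y j k) \<in> SP d1 \<psi>"
proof -
  obtain c c' where "X = (\<lambda>j k. \<Sum>i<d1. c i * \<psi> i j k)" "Y = (\<lambda>j k. \<Sum>i<d1. c' i * \<psi> i j k)"
    using assms unfolding SP_def by auto
  then have "(\<lambda>j k. X j k + t * Y j k) = (\<lambda>j k. \<Sum>i<d1. (c i + t * c' i) * \<psi> i j k)"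
    by (auto simp: sum.distrib sum_distrib_left algebra_simps)
  then show ?thesis unfolding SP_def mem_Collect_eq by (rule exI[of _ "\<lambda>i. c i + t * c' i"])
qed

lemma SP_inbox: "\<psi> \<in> tensor3 d1 d2 d3 \<Longrightarrow> X \<in> SP d1 \<psi> \<Longrightarrow> inbox d2 d3 X"
  unfolding SP_def inbox_def tensor3_def by auto

lemma ip_SP:
  assumes "\<forall>i<d1. ip d2 d3 M (\<psi> i) = 0" "X \<in> SP d1 \<psi>"
  shows "ip d2 d3 M X = 0"
proof -
  obtain c where X: "X = (\<lambda>j k. \<Sum>i<d1. c i * \<psi> i j k)" using assms(2) unfolding SP_def by auto
  have "ip d2 d3 M X = (\<Sum>j<d2. \<Sum>k<d3. \<Sum>i<d1. c i * (M j k * \<psi> i j k))"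
    unfolding X ip_def by (simp add: sum_distrib_left mult_ac)
  also have "\<dots> = (\<Sum>i<d1. \<Sum>j<d2. \<Sum>k<d3. c i * (M j k * \<psi> i j k))"
    by (rule swap_in2)
  also have "\<dots> = (\<Sum>i<d1. c i * ip d2 d3 M (\<psi> i))"
    unfolding ip_def by (simp add: sum_distrib_left)
  finally have "ip d2 d3 M X = (\<Sum>i<d1. c i * ip d2 d3 M (\<psi> i))" .
  then show ?thesis using assms(1) by simp
qed

lemma SP_local:
  assumes "Y \<in> SP d1 (local_op d1 d2 d3 L1 L2 L3 \<psi>)"
  shows "\<exists>X\<in>SP d1 \<psi>. Y = gmap d2 d3 L2 L3 X"
proof -
  obtain c where Y: "Y = (\<lambda>j k. \<Sum>a<d1. c a * local_op d1 d2 d3 L1 L2 L3 \<psi> a j k)"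
    using assms unfolding SP_def by auto
  define e where "e i = (\<Sum>a<d1. c a * L1 a i)" for i
  have "Y = (\<lambda>j k. \<Sum>i<d1. e i * gmap d2 d3 L2 L3 (\<psi> i) j k)"
  proof (intro ext)
    fix j k
    have "Y j k = (\<Sum>a<d1. \<Sum>i<d1. c a * L1 a i * gmap d2 d3 L2 L3 (\<psi> i) j k)"
      unfolding Y by (auto simp: slice_local sum_distrib_left mult.assoc intro!: sum.cong)
    also have "\<dots> = (\<Sum>i<d1. e i * gmap d2 d3 L2 L3 (\<psi> i) j k)"
      unfolding e_def sum_distrib_right by (rule sum.swap)
    finally show "Y j k = (\<Sum>i<d1. e i * gmap d2 d3 L2 L3 (\<psi> i) j k)" .
  qed
  then have "Y = gmap d2 d3 L2 L3 (\<lambda>j k. \<Sum>i<d1. e i * \<psi> i j k)" by (simp add: gmap_lin)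
  moreover have "(\<lambda>j k. \<Sum>i<d1. e i * \<psi> i j k) \<in> SP d1 \<psi>" unfolding SP_def by blast
  ultimately show ?thesis by blast
qed

lemma slice_local_dlt:
  "a < d1 \<Longrightarrow> local_op d1 d2 d3 dlt A B \<psi> a = gmap d2 d3 A B (\<psi> a)"
  by (simp add: slice_local sum_dlt_left)

lemma SP_gmap:
  assumes "X \<in> SP d1 \<psi>"
  shows "gmap d2 d3 A B X \<in> SP d1 (local_op d1 d2 d3 dlt A B \<psi>)"
proof -
  obtain c where X: "X = (\<lambda>j k. \<Sum>i<d1. c i * \<psi> i j k)" using assms unfolding SP_def by auto
  have "gmap d2 d3 A B X = (\<lambda>j k. \<Sum>i<d1. c i * local_op d1 d2 d3 dlt A B \<psi> i j k)"
    unfolding X gmap_lin by (auto intro!: ext sum.cong simp: slice_local_dlt)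
  then show ?thesis unfolding SP_def mem_Collect_eq by (rule exI[of _ c])
qed

lemma F3:
  assumes "\<phi> \<in> tensor3 d1 d2 d3" "\<forall>a<d1. \<phi> a \<in> SP d1 \<psi>"
  shows "slocc_le d1 d2 d3 \<phi> \<psi>"
proof -
  have "\<forall>a\<in>{..<d1}. \<exists>c. \<phi> a = (\<lambda>j k. \<Sum>i<d1. c i * \<psi> i j k)"
    using assms(2) unfolding SP_def by auto
  from bchoice[OF this] obtain C where C0: "\<forall>a\<in>{..<d1}. \<phi> a = (\<lambda>j k. \<Sum>i<d1. C a i * \<psi> i j k)"
    by blast
  have C: "\<phi> a j k = (\<Sum>i<d1. C a i * \<psi> i j k)" if "a < d1" for a j k using C0 that by auto
  have "local_op d1 d2 d3 C dlt dlt \<psi> = \<phi>"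
  proof (intro ext)
    fix a b c
    show "local_op d1 d2 d3 C dlt dlt \<psi> a b c = \<phi> a b c"
    proof (cases "a < d1 \<and> b < d2 \<and> c < d3")
      case True
      then have "local_op d1 d2 d3 C dlt dlt \<psi> a b c = (\<Sum>i<d1. C a i * \<psi> i b c)"
        by (simp add: local_op_def mult.assoc sum_distrib_left[symmetric] sum_dlt_left)
      then show ?thesis using C True by simp
    next
      case False then show ?thesis using assms(1) unfolding local_op_def tensor3_def by auto
    qed
  qed
  then show ?thesis unfolding slocc_le_def by blast
qed

lemma ip_gmap: "ip d2 d3 M (gmap d2 d3 A B X) = ip d2 d3 (gmapT d2 d3 A B M) X"
proof -
  have "ip d2 d3 M (gmap d2 d3 A B X) = (\<Sum>j<d2. \<Sum>k<d3. \<Sum>b<d2. \<Sum>c<d3. M j k * (A j b * B k c * X b c))"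
    unfolding ip_def gmap_def by (simp add: sum_distrib_left)
  also have "\<dots> = (\<Sum>b<d2. \<Sum>c<d3. \<Sum>j<d2. \<Sum>k<d3. M j k * (A j b * B k c * X b c))"
    by (rule swap22)
  also have "\<dots> = ip d2 d3 (gmapT d2 d3 A B M) X"
    unfolding ip_def gmapT_def by (intro sum.cong refl) (simp add: sum_distrib_left mult_ac)
  finally show ?thesis .
qed

lemma gmap_comp:
  "gmap d2 d3 A B (gmap d2 d3 A' B' X) = gmap d2 d3 (mm d2 A A') (mm d3 B B') X"
proof (intro ext)
  fix j k
  show "gmap d2 d3 A B (gmap d2 d3 A' B' X) j k = gmap d2 d3 (mm d2 A A') (mm d3 B B') X j k"
  proof (cases "j < d2 \<and> k < d3")
    case True
    have "gmap d2 d3 A B (gmap d2 d3 A' B' X) j k =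
       (\<Sum>b<d2. \<Sum>c<d3. \<Sum>b'<d2. \<Sum>c'<d3. A j b * A' b b' * (B k c * B' c c') * X b' c')"
      using True by (simp add: gmap_def sum_distrib_left mult_ac)
    also have "\<dots> = (\<Sum>b'<d2. \<Sum>c'<d3. \<Sum>b<d2. \<Sum>c<d3. A j b * A' b b' * (B k c * B' c c') * X b' c')"
      by (rule swap22)
    also have "\<dots> = gmap d2 d3 (mm d2 A A') (mm d3 B B') X j k"
      using True unfolding gmap_def mm_def
      by (simp add: prod2_sum)
    finally show ?thesis .
  qed (auto simp: gmap_def)
qed

lemma gmap_id: "inbox d2 d3 X \<Longrightarrow> gmap d2 d3 dlt dlt X = X"
  unfolding gmap_def inbox_def
  by (auto intro!: ext simp: mult.assoc sum_distrib_left[symmetric] sum_dlt_left)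

lemma RI:
  fixes f :: "nat \<Rightarrow> nat \<Rightarrow> complex"
  assumes "0 < d3"
  shows "(\<Sum>n<d2*d3. f (n div d3) (n mod d3)) = (\<Sum>j<d2. \<Sum>k<d3. f j k)"
proof -
  have "(\<Sum>n<d2*d3. f (n div d3) (n mod d3)) = (\<Sum>j<d2. \<Sum>n\<in>{j*d3..<j*d3+d3}. f (n div d3) (n mod d3))"
    by (rule sum.nat_group[symmetric])
  also have "\<dots> = (\<Sum>j<d2. \<Sum>k<d3. f j k)"
  proof (rule sum.cong[OF refl])
    fix j
    have "(\<Sum>n\<in>{0 + j*d3..<d3 + j*d3}. f (n div d3) (n mod d3)) = (\<Sum>k\<in>{0..<d3}. f ((k + j*d3) div d3) ((k + j*d3) mod d3))"
      by (rule sum.shift_bounds_nat_ivl)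
    also have "\<dots> = (\<Sum>k<d3. f j k)"
      using assms by (intro sum.cong) auto
    finally show "(\<Sum>n\<in>{j*d3..<j*d3+d3}. f (n div d3) (n mod d3)) = (\<Sum>k<d3. f j k)"
      by (simp add: add.commute)
  qed
  finally show ?thesis .
qed

definition Dm :: "nat \<Rightarrow> nat \<Rightarrow> nat \<Rightarrow> complex" where
  "Dm r = (\<lambda>j k. if j = k \<and> j < r then 1 else 0)"
definition Em :: "nat \<Rightarrow> nat \<Rightarrow> nat \<Rightarrow> nat \<Rightarrow> complex" where
  "Em a b = (\<lambda>j k. if j = a \<and> k = b then 1 else 0)"

lemma mult_ind: "x * (if P then 1 else 0) = (if P then x else (0::complex))" by simp

lemma ip_Em: "a < d2 \<Longrightarrow> b < d3 \<Longrightarrow> ip d2 d3 M (Em a b) = M a b"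
proof -
  assume ab: "a < d2" "b < d3"
  have "(\<Sum>k<d3. M j k * Em a b j k) = (if j = a then M a b else 0)" for j
    using ab by (cases "j = a") (simp_all add: Em_def mult_ind)
  then show ?thesis using ab unfolding ip_def by simp
qed

lemma ip_lin: "ip d2 d3 M (\<lambda>j k. X j k + t * Y j k) = ip d2 d3 M X + t * ip d2 d3 M Y"
  unfolding ip_def by (simp add: algebra_simps sum.distrib sum_distrib_left)

lemma inbox_Em: "a < d2 \<Longrightarrow> b < d3 \<Longrightarrow> inbox d2 d3 (Em a b)"
  unfolding inbox_def Em_def dlt_def by auto

lemma inbox_lin: "inbox d2 d3 X \<Longrightarrow> inbox d2 d3 Y \<Longrightarrow> inbox d2 d3 (\<lambda>j k. X j k + t * Y j k)"
  unfolding inbox_def by auto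

lemma HM:
  assumes Wb: "\<forall>X\<in>W. inbox d2 d3 X"
    and Wc: "\<And>X Y t. X \<in> W \<Longrightarrow> Y \<in> W \<Longrightarrow> (\<lambda>j k. X j k + t * Y j k) \<in> W"
    and HW: "Hyp d2 d3 M \<subseteq> W"
    and Z: "inbox d2 d3 Z" "Z \<notin> W"
  shows "W \<subseteq> Hyp d2 d3 M"
proof
  fix Y assume Y: "Y \<in> W"
  show "Y \<in> Hyp d2 d3 M"
  proof (rule ccontr)
    assume "Y \<notin> Hyp d2 d3 M"
    then have nz: "ip d2 d3 M Y \<noteq> 0" using Wb Y unfolding Hyp_def by auto
    define t where "t = - ip d2 d3 M Z / ip d2 d3 M Y"
    define Z' where "Z' = (\<lambda>j k. Z j k + t * Y j k)"
    have "inbox d2 d3 Y" using Wb Y by auto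
    then have "inbox d2 d3 Z'" unfolding Z'_def using Z(1) by (rule inbox_lin[rotated])
    then have "Z' \<in> Hyp d2 d3 M"
      unfolding Hyp_def Z'_def mem_Collect_eq ip_lin using nz Wb Y Z(1) by (auto simp: t_def intro!: inbox_lin)
    then have Z'W: "Z' \<in> W" using HW by auto
    have "(\<lambda>j k. Z' j k + (-t) * Y j k) \<in> W" using Wc[OF Z'W Y] .
    moreover have "(\<lambda>j k. Z' j k + (-t) * Y j k) = Z" unfolding Z'_def by auto
    ultimately show False using Z(2) by simp
  qed
qed

lemma HI:
  assumes "1 \<le> r" "0 < d2" "0 < d3"
    and R: "\<forall>X\<in>Hyp d2 d3 (Dm r). ip d2 d3 R X = 0"
  shows "\<forall>j<d2. \<forall>k<d3. R j k = R 0 0 * Dm r j k"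
proof (intro allI impI)
  fix j k assume jk: "j < d2" "k < d3"
  define c where "c = - Dm r j k"
  define X where "X = (\<lambda>j' k'. Em j k j' k' + c * Em 0 0 j' k')"
  have D00: "Dm r 0 0 = 1" using assms by (simp add: Dm_def)
  have "inbox d2 d3 X" unfolding X_def using jk assms by (intro inbox_lin inbox_Em) auto
  then have "X \<in> Hyp d2 d3 (Dm r)"
    unfolding Hyp_def X_def mem_Collect_eq ip_lin using jk assms D00
    by (auto simp: ip_Em inbox_Em c_def intro!: inbox_lin)
  then have "ip d2 d3 R X = 0" using R by auto
  then show "R j k = R 0 0 * Dm r j k"
    unfolding X_def ip_lin using jk assms by (simp add: ip_Em c_def)
qed

lemma F1:
  assumes "\<psi> \<in> tensor3 d1 d2 d3" "d1 < d2 * d3"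
  shows "\<exists>M. inbox d2 d3 M \<and> (\<exists>j<d2. \<exists>k<d3. M j k \<noteq> 0) \<and> (\<forall>i<d1. ip d2 d3 M (\<psi> i) = 0)"
proof -
  have d3: "0 < d3" using assms(2) by (cases d3) auto
  define B where "B i n = \<psi> i (n div d3) (n mod d3)" for i n
  obtain v where v1: "\<exists>n<d2*d3. v n \<noteq> 0" and v2: "\<forall>i<d1. (\<Sum>n<d2*d3. B i n * v n) = 0"
    using hom_exists[OF assms(2), of B] by auto
  define M where "M j k = (if j < d2 \<and> k < d3 then v (j * d3 + k) else 0)" for j k
  have "inbox d2 d3 M" unfolding inbox_def M_def by auto
  moreover have "\<exists>j<d2. \<exists>k<d3. M j k \<noteq> 0"
  proof -
    obtain n where n: "n < d2*d3" "v n \<noteq> 0" using v1 by auto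
    have "n div d3 < d2" using n(1) by (simp add: less_mult_imp_div_less)
    moreover have "n mod d3 < d3" using d3 by simp
    moreover have "M (n div d3) (n mod d3) = v n"
      using calculation by (simp add: M_def mult.commute[of _ d3])
    ultimately show ?thesis using n by metis
  qed
  moreover have "ip d2 d3 M (\<psi> i) = 0" if i: "i < d1" for i
  proof -
    have "ip d2 d3 M (\<psi> i) = (\<Sum>j<d2. \<Sum>k<d3. v (j * d3 + k) * \<psi> i j k)"
      unfolding ip_def M_def by (auto intro!: sum.cong)
    also have "\<dots> = (\<Sum>n<d2*d3. v ((n div d3) * d3 + n mod d3) * \<psi> i (n div d3) (n mod d3))"
      by (rule RI[OF d3, symmetric])
    also have "\<dots> = (\<Sum>n<d2*d3. B i n * v n)"
      unfolding B_def by (simp add: mult.commute)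
    finally show ?thesis using v2 i by simp
  qed
  ultimately show ?thesis by blast
qed

lemma F1':
  assumes "\<psi> \<in> tensor3 d1 d2 d3" "d1 < d2 * d3"
  shows "\<exists>Z. inbox d2 d3 Z \<and> Z \<notin> SP d1 \<psi>"
proof -
  obtain M j k where M: "j < d2" "k < d3" "M j k \<noteq> 0" "\<forall>i<d1. ip d2 d3 M (\<psi> i) = 0"
    using F1[OF assms] by blast
  have "Em j k \<notin> SP d1 \<psi>"
  proof
    assume "Em j k \<in> SP d1 \<psi>"
    then have "ip d2 d3 M (Em j k) = 0" using ip_SP M(4) by blast
    then show False using M by (simp add: ip_Em)
  qed
  then show ?thesis using inbox_Em M by blast
qed

definition Phi :: "nat \<Rightarrow> nat \<Rightarrow> nat \<Rightarrow> nat \<Rightarrow> nat \<Rightarrow> nat \<Rightarrow> nat \<Rightarrow> complex" where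
  "Phi d1 d2 d3 r = (\<lambda>a j k. if a < d1 \<and> j < d2 \<and> k < d3 then
     Em (Suc a div d3) (Suc a mod d3) j k - Dm r (Suc a div d3) (Suc a mod d3) * Em 0 0 j k else 0)"

lemma Phi_tensor3: "Phi d1 d2 d3 r \<in> tensor3 d1 d2 d3"
  unfolding Phi_def tensor3_def by auto

lemma ip_cong: "(\<And>j k. j < d2 \<Longrightarrow> k < d3 \<Longrightarrow> X j k = Y j k) \<Longrightarrow> ip d2 d3 M X = ip d2 d3 M Y"
  unfolding ip_def by (auto intro!: sum.cong)

lemma Em_sym: "Em j' k' j k = Em j k j' k'"
  unfolding Em_def by auto

lemma ip_comm: "ip d2 d3 M X = ip d2 d3 X M"
  unfolding ip_def by (simp add: mult.commute)

lemma SP_Phi: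
  assumes d1: "d1 = d2 * d3 - 1" and "2 \<le> d2" "2 \<le> d3" "1 \<le> r"
  shows "SP d1 (Phi d1 d2 d3 r) = Hyp d2 d3 (Dm r)"
proof
  have d3: "0 < d3" and d2: "0 < d2" using assms by auto
  have N: "Suc d1 = d2 * d3" using assms d1 by (cases "d2 * d3") (auto simp: mult_eq_0_iff)
  have D00: "Dm r 0 0 = 1" using assms by (simp add: Dm_def)
  have gbox: "Suc a div d3 < d2" "Suc a mod d3 < d3" if "a < d1" for a
    using that N d3 by (auto simp: less_mult_imp_div_less)
  show "SP d1 (Phi d1 d2 d3 r) \<subseteq> Hyp d2 d3 (Dm r)"
  proof
    fix X assume X: "X \<in> SP d1 (Phi d1 d2 d3 r)"
    have "ip d2 d3 (Dm r) (Phi d1 d2 d3 r a) = 0" if a: "a < d1" for a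
    proof -
      define c where "c = - Dm r (Suc a div d3) (Suc a mod d3)"
      have "ip d2 d3 (Dm r) (Phi d1 d2 d3 r a) =
            ip d2 d3 (Dm r) (\<lambda>j k. Em (Suc a div d3) (Suc a mod d3) j k + c * Em 0 0 j k)"
        by (rule ip_cong) (simp add: Phi_def a c_def)
      also have "\<dots> = 0" unfolding ip_lin using gbox[OF a] d2 d3 D00 by (simp add: ip_Em c_def)
      finally show ?thesis .
    qed
    then have "ip d2 d3 (Dm r) X = 0" using ip_SP X by blast
    moreover have "inbox d2 d3 X" using SP_inbox[OF Phi_tensor3 X] .
    ultimately show "X \<in> Hyp d2 d3 (Dm r)" unfolding Hyp_def by simp
  qed
  show "Hyp d2 d3 (Dm r) \<subseteq> SP d1 (Phi d1 d2 d3 r)"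
  proof
    fix X assume X: "X \<in> Hyp d2 d3 (Dm r)"
    then have Xb: "inbox d2 d3 X" and X0: "ip d2 d3 (Dm r) X = 0" unfolding Hyp_def by auto
    define c where "c a = X (Suc a div d3) (Suc a mod d3)" for a
    have "X j k = (\<Sum>a<d1. c a * Phi d1 d2 d3 r a j k)" for j k
    proof (cases "j < d2 \<and> k < d3")
      case False
      then show ?thesis using Xb unfolding inbox_def Phi_def by auto
    next
      case True
      define F where "F n = X (n div d3) (n mod d3) * Em (n div d3) (n mod d3) j k -
          X (n div d3) (n mod d3) * Dm r (n div d3) (n mod d3) * Em 0 0 j k" for n
      have "(\<Sum>n<d2*d3. F n) = (\<Sum>j'<d2. \<Sum>k'<d3. X j' k' * Em j' k' j k - X j' k' * Dm r j' k' * Em 0 0 j k)"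
        unfolding F_def by (rule RI[OF d3])
      also have "\<dots> = ip d2 d3 X (Em j k) - ip d2 d3 X (Dm r) * Em 0 0 j k"
        unfolding ip_def by (simp add: sum_subtractf sum_distrib_right Em_sym[of _ _ j k])
      also have "\<dots> = X j k" using True X0 by (simp add: ip_Em ip_comm[of d2 d3 X "Dm r"])
      finally have s1: "(\<Sum>n<d2*d3. F n) = X j k" .
      have "(\<Sum>n<d2*d3. F n) = F 0 + (\<Sum>a<d1. F (Suc a))"
        unfolding N[symmetric] by (rule sum.lessThan_Suc_shift)
      moreover have "F 0 = 0" unfolding F_def using D00 by simp
      moreover have "(\<Sum>a<d1. F (Suc a)) = (\<Sum>a<d1. c a * Phi d1 d2 d3 r a j k)"
        unfolding F_def c_def Phi_def using True by (intro sum.cong refl) (simp add: algebra_simps)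
      ultimately show ?thesis using s1 by simp
    qed
    then have "X = (\<lambda>j k. \<Sum>a<d1. c a * Phi d1 d2 d3 r a j k)" by (intro ext)
    then show "X \<in> SP d1 (Phi d1 d2 d3 r)" unfolding SP_def mem_Collect_eq by (rule exI[of _ c])
  qed
qed

lemma ifz_mult: "(if P then a else 0) * x = (if P then a * x else (0::complex))" by simp

lemma dlt_sym: "dlt i j = dlt j i" unfolding dlt_def by auto

lemma isinv_tr: "isinv d A A' \<Longrightarrow> isinv d (\<lambda>i j. A j i) (\<lambda>i j. A' j i)"
  unfolding isinv_def mm_def by (simp add: mult.commute dlt_sym)

lemma inv_from_lker:
  fixes A :: "nat \<Rightarrow> nat \<Rightarrow> complex"
  assumes ker: "\<And>v. (\<forall>i<d. (\<Sum>k<d. A k i * v k) = 0) \<Longrightarrow> (\<forall>k<d. v k = 0)"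
  shows "\<exists>A'. isinv d A A'"
proof -
  obtain B where "isinv d (\<lambda>i j. A j i) B" using inv_from_ker[of d "\<lambda>i j. A j i"] ker by blast
  then have "isinv d A (\<lambda>i j. B j i)" using isinv_tr[of d "\<lambda>i j. A j i" B] by simp
  then show ?thesis by blast
qed

lemma K1_row:
  assumes d: "2 \<le> d2" "2 \<le> d3" and r: "1 \<le> r"
    and H: "Hyp d2 d3 (Dm r) \<subseteq> SP d1 \<phi>"
    and phi: "\<phi> = local_op d1 d2 d3 L1 L2 L3 \<psi>"
  shows "\<exists>L2'. isinv d2 L2 L2'"
proof (rule inv_from_lker, rule ccontr)
  fix v assume v: "\<forall>i<d2. (\<Sum>k<d2. L2 k i * v k) = 0" and nz: "\<not> (\<forall>k<d2. v k = 0)"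
  then obtain b0 where b0: "b0 < d2" "v b0 \<noteq> 0" by auto
  define R :: "nat \<Rightarrow> nat \<Rightarrow> complex" where "R = (\<lambda>b k. if k = 1 then v b else (0::complex))"
  have ipR: "ip d2 d3 R X = (\<Sum>b<d2. v b * X b 1)" for X
    unfolding ip_def R_def using d by (intro sum.cong refl) (simp add: ifz_mult)
  have "ip d2 d3 R (\<phi> a) = 0" if a: "a < d1" for a
  proof -
    have "ip d2 d3 R (\<phi> a) = (\<Sum>b<d2. \<Sum>i<d1. \<Sum>j<d2. \<Sum>k<d3. v b * (L1 a i * L2 b j * L3 1 k * \<psi> i j k))"
      unfolding ipR
    proof (rule sum.cong[OF refl])
      fix b assume b: "b \<in> {..<d2}"
      have "\<phi> a b 1 = (\<Sum>i<d1. \<Sum>j<d2. \<Sum>k<d3. L1 a i * L2 b j * L3 1 k * \<psi> i j k)"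
      proof -
        have "1 < d3" using d by simp
        then show ?thesis using a b unfolding phi local_op_def by simp
      qed
      then show "v b * \<phi> a b 1 = (\<Sum>i<d1. \<Sum>j<d2. \<Sum>k<d3. v b * (L1 a i * L2 b j * L3 1 k * \<psi> i j k))"
        by (simp only: sum_distrib_left)
    qed
    also have "\<dots> = (\<Sum>i<d1. \<Sum>j<d2. \<Sum>k<d3. \<Sum>b<d2. v b * (L1 a i * L2 b j * L3 1 k * \<psi> i j k))"
      by (rule swap13)
    also have "\<dots> = (\<Sum>i<d1. \<Sum>j<d2. \<Sum>k<d3. (L1 a i * L3 1 k * \<psi> i j k) * (\<Sum>b<d2. L2 b j * v b))"
      by (simp add: sum_distrib_left mult_ac)
    also have "\<dots> = 0" using v by simp
    finally show ?thesis .
  qed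
  then have "\<forall>X\<in>SP d1 \<phi>. ip d2 d3 R X = 0" using ip_SP by blast
  then have "\<forall>X\<in>Hyp d2 d3 (Dm r). ip d2 d3 R X = 0" using H by blast
  moreover have "0 < d2" "0 < d3" "1 < d3" using d by auto
  ultimately have "\<forall>j<d2. \<forall>k<d3. R j k = R 0 0 * Dm r j k" using HI[OF r] by blast
  then have "R b0 1 = R 0 0 * Dm r b0 1" using b0 \<open>1 < d3\<close> by blast
  then show False using b0 by (simp add: R_def)
qed

lemma K1_col:
  assumes d: "2 \<le> d2" "2 \<le> d3" and r: "1 \<le> r"
    and H: "Hyp d2 d3 (Dm r) \<subseteq> SP d1 \<phi>"
    and phi: "\<phi> = local_op d1 d2 d3 L1 L2 L3 \<psi>"
  shows "\<exists>L3'. isinv d3 L3 L3'"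
proof (rule inv_from_lker, rule ccontr)
  fix v assume v: "\<forall>i<d3. (\<Sum>k<d3. L3 k i * v k) = 0" and nz: "\<not> (\<forall>k<d3. v k = 0)"
  then obtain c0 where c0: "c0 < d3" "v c0 \<noteq> 0" by auto
  define R :: "nat \<Rightarrow> nat \<Rightarrow> complex" where "R = (\<lambda>b k. if b = 1 then v k else (0::complex))"
  have ipR: "ip d2 d3 R X = (\<Sum>c<d3. v c * X 1 c)" for X
  proof -
    have "ip d2 d3 R X = (\<Sum>b<d2. if b = 1 then (\<Sum>c<d3. v c * X 1 c) else 0)"
      unfolding ip_def R_def by (intro sum.cong refl) auto
    then show ?thesis using d by simp
  qed
  have "ip d2 d3 R (\<phi> a) = 0" if a: "a < d1" for a
  proof -
    have "ip d2 d3 R (\<phi> a) = (\<Sum>c<d3. \<Sum>i<d1. \<Sum>j<d2. \<Sum>k<d3. v c * (L1 a i * L2 1 j * L3 c k * \<psi> i j k))"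
      unfolding ipR
    proof (rule sum.cong[OF refl])
      fix c assume c: "c \<in> {..<d3}"
      have "\<phi> a 1 c = (\<Sum>i<d1. \<Sum>j<d2. \<Sum>k<d3. L1 a i * L2 1 j * L3 c k * \<psi> i j k)"
      proof -
        have "1 < d2" using d by simp
        then show ?thesis using a c unfolding phi local_op_def by simp
      qed
      then show "v c * \<phi> a 1 c = (\<Sum>i<d1. \<Sum>j<d2. \<Sum>k<d3. v c * (L1 a i * L2 1 j * L3 c k * \<psi> i j k))"
        by (simp only: sum_distrib_left)
    qed
    also have "\<dots> = (\<Sum>i<d1. \<Sum>j<d2. \<Sum>k<d3. \<Sum>c<d3. v c * (L1 a i * L2 1 j * L3 c k * \<psi> i j k))"
      by (rule swap13)
    also have "\<dots> = (\<Sum>i<d1. \<Sum>j<d2. \<Sum>k<d3. (L1 a i * L2 1 j * \<psi> i j k) * (\<Sum>c<d3. L3 c k * v c))"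
      by (simp add: sum_distrib_left mult_ac)
    also have "\<dots> = 0" using v by simp
    finally show ?thesis .
  qed
  then have "\<forall>X\<in>SP d1 \<phi>. ip d2 d3 R X = 0" using ip_SP by blast
  then have "\<forall>X\<in>Hyp d2 d3 (Dm r). ip d2 d3 R X = 0" using H by blast
  moreover have "0 < d2" "0 < d3" "1 < d2" using d by auto
  ultimately have "\<forall>j<d2. \<forall>k<d3. R j k = R 0 0 * Dm r j k" using HI[OF r] by blast
  then have "R 1 c0 = R 0 0 * Dm r 1 c0" using c0 \<open>1 < d2\<close> by blast
  then show False using c0 by (simp add: R_def)
qed

lemma K2:
  assumes N: "d1 < d2 * d3"
    and H: "Hyp d2 d3 (Dm r) \<subseteq> SP d1 \<phi>"
    and phi: "\<phi> = local_op d1 d2 d3 L1 L2 L3 \<psi>"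
    and psi: "\<psi> \<in> tensor3 d1 d2 d3"
    and i2: "isinv d2 L2 L2'" and i3: "isinv d3 L3 L3'"
  shows "SP d1 (local_op d1 d2 d3 dlt L2 L3 \<psi>) = Hyp d2 d3 (Dm r)"
    and "\<psi> = local_op d1 d2 d3 dlt L2' L3' (local_op d1 d2 d3 dlt L2 L3 \<psi>)"
proof -
  define \<psi>2 where "\<psi>2 = local_op d1 d2 d3 dlt L2 L3 \<psi>"
  have t2: "\<psi>2 \<in> tensor3 d1 d2 d3" unfolding \<psi>2_def by (rule local_op_tensor3)
  have "\<phi> = local_op d1 d2 d3 (mm d1 L1 dlt) (mm d2 dlt L2) (mm d3 dlt L3) \<psi>"
    unfolding phi by (rule local_op_cong) (simp_all add: mm_dlt_left mm_dlt_right)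
  then have phi2: "\<phi> = local_op d1 d2 d3 L1 dlt dlt \<psi>2"
    unfolding \<psi>2_def by (simp add: local_op_comp)
  have sub: "SP d1 \<phi> \<subseteq> SP d1 \<psi>2"
  proof
    fix Y assume "Y \<in> SP d1 \<phi>"
    then obtain X where X: "X \<in> SP d1 \<psi>2" "Y = gmap d2 d3 dlt dlt X"
      using SP_local[of Y d1 d2 d3 L1 dlt dlt \<psi>2] phi2 by auto
    have "inbox d2 d3 X" using SP_inbox[OF t2 X(1)] .
    then show "Y \<in> SP d1 \<psi>2" using X by (simp add: gmap_id)
  qed
  obtain Z where Z: "inbox d2 d3 Z" "Z \<notin> SP d1 \<psi>2" using F1'[OF t2 N] by blast
  have "SP d1 \<psi>2 \<subseteq> Hyp d2 d3 (Dm r)"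
    by (rule HM[OF _ _ _ Z]) (use SP_inbox[OF t2] SP_add H sub in auto)
  then show "SP d1 (local_op d1 d2 d3 dlt L2 L3 \<psi>) = Hyp d2 d3 (Dm r)"
    using H sub unfolding \<psi>2_def by auto
  have "local_op d1 d2 d3 dlt L2' L3' \<psi>2 = local_op d1 d2 d3 (mm d1 dlt dlt) (mm d2 L2' L2) (mm d3 L3' L3) \<psi>"
    unfolding \<psi>2_def by (simp add: local_op_comp)
  also have "\<dots> = local_op d1 d2 d3 dlt dlt dlt \<psi>"
    by (rule local_op_cong) (use i2 i3 in \<open>auto simp: isinv_def mm_dlt_left\<close>)
  also have "\<dots> = \<psi>" using local_op_id[OF psi] .
  finally show "\<psi> = local_op d1 d2 d3 dlt L2' L3' (local_op d1 d2 d3 dlt L2 L3 \<psi>)"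
    unfolding \<psi>2_def by simp
qed

lemma Phi_maximal:
  assumes d1: "d1 = d2 * d3 - 1" and d: "2 \<le> d2" "2 \<le> d3" and r: "1 \<le> r"
  shows "slocc_maximal d1 d2 d3 (Phi d1 d2 d3 r)"
  unfolding slocc_maximal_def
proof (intro conjI ballI impI)
  show "Phi d1 d2 d3 r \<in> tensor3 d1 d2 d3" by (rule Phi_tensor3)
  fix \<psi> assume psi: "\<psi> \<in> tensor3 d1 d2 d3" and le: "slocc_le d1 d2 d3 (Phi d1 d2 d3 r) \<psi>"
  then obtain L1 L2 L3 where phi: "Phi d1 d2 d3 r = local_op d1 d2 d3 L1 L2 L3 \<psi>"
    unfolding slocc_le_def by metis
  have N: "d1 < d2 * d3" using d1 d by (cases "d2 * d3") auto
  have H: "Hyp d2 d3 (Dm r) \<subseteq> SP d1 (Phi d1 d2 d3 r)" using SP_Phi[OF d1 d r] by simp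
  obtain L2' where i2: "isinv d2 L2 L2'" using K1_row[OF d r H phi] by blast
  obtain L3' where i3: "isinv d3 L3 L3'" using K1_col[OF d r H phi] by blast
  define \<psi>2 where "\<psi>2 = local_op d1 d2 d3 dlt L2 L3 \<psi>"
  have sp2: "SP d1 \<psi>2 = Hyp d2 d3 (Dm r)" and bk: "\<psi> = local_op d1 d2 d3 dlt L2' L3' \<psi>2"
    using K2[OF N H phi psi i2 i3] unfolding \<psi>2_def by auto
  have "slocc_le d1 d2 d3 \<psi>2 (Phi d1 d2 d3 r)"
  proof (rule F3)
    show "\<psi>2 \<in> tensor3 d1 d2 d3" unfolding \<psi>2_def by (rule local_op_tensor3)
    show "\<forall>a<d1. \<psi>2 a \<in> SP d1 (Phi d1 d2 d3 r)"
      using SP_slice[of _ d1 \<psi>2] sp2 SP_Phi[OF d1 d r] by auto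
  qed
  moreover have "slocc_le d1 d2 d3 \<psi> \<psi>2" unfolding slocc_le_def using bk by metis
  ultimately show "slocc_le d1 d2 d3 \<psi> (Phi d1 d2 d3 r)" using slocc_le_trans by blast
qed

lemma gmap_cong:
  assumes "\<And>i j. i < d2 \<Longrightarrow> j < d2 \<Longrightarrow> A i j = A' i j"
    "\<And>i j. i < d3 \<Longrightarrow> j < d3 \<Longrightarrow> B i j = B' i j"
  shows "gmap d2 d3 A B X = gmap d2 d3 A' B' X"
  unfolding gmap_def using assms by (auto intro!: ext sum.cong)

lemma inbox_Em': "0 < d2 \<Longrightarrow> 0 < d3 \<Longrightarrow> inbox d2 d3 (Em 0 0)"
  by (rule inbox_Em)

lemma FACT:
  fixes P Q :: "nat \<Rightarrow> nat \<Rightarrow> complex"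
  assumes h: "\<forall>j<s. \<forall>k<s. Dm s j k = (\<Sum>t<r. P j t * Q t k)" and rs: "r < s"
  shows False
proof -
  obtain v where v1: "\<exists>k<s. v k \<noteq> 0" and v2: "\<forall>t<r. (\<Sum>k<s. Q t k * v k) = 0"
    using hom_exists[OF rs, of Q] by auto
  have "v j = 0" if j: "j < s" for j
  proof -
    have "v j = (\<Sum>k<s. Dm s j k * v k)"
      using j by (simp add: Dm_def ifz_mult)
    also have "\<dots> = (\<Sum>k<s. \<Sum>t<r. P j t * (Q t k * v k))"
      using h j by (intro sum.cong refl) (simp add: sum_distrib_right mult.assoc)
    also have "\<dots> = (\<Sum>t<r. P j t * (\<Sum>k<s. Q t k * v k))"
      by (subst sum.swap) (simp add: sum_distrib_left)
    also have "\<dots> = 0" using v2 by simp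
    finally show ?thesis .
  qed
  then show False using v1 by auto
qed

lemma gmapT_Dm:
  assumes "r \<le> d2" "r \<le> d3"
  shows "gmapT d2 d3 A B (Dm r) j k = (\<Sum>b<r. A b j * B b k)"
proof -
  have "gmapT d2 d3 A B (Dm r) j k = (\<Sum>b<d2. if b < r then A b j * B b k else 0)"
    unfolding gmapT_def
  proof (rule sum.cong[OF refl])
    fix b assume b: "b \<in> {..<d2}"
    show "(\<Sum>c<d3. A b j * B c k * Dm r b c) = (if b < r then A b j * B b k else 0)"
    proof (cases "b < r")
      case True
      then have "b < d3" using assms by simp
      then show ?thesis using True by (simp add: Dm_def mult_ind)
    next
      case False
      then show ?thesis by (simp add: Dm_def)
    qed
  qed
  also have "\<dots> = (\<Sum>b\<in>{b\<in>{..<d2}. b < r}. A b j * B b k)"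
    using sum.inter_filter[of "{..<d2}" "\<lambda>b. A b j * B b k" "\<lambda>b. b < r"] by simp
  also have "{b\<in>{..<d2}. b < r} = {..<r}" using assms by auto
  finally show ?thesis .
qed

lemma Phi_distinct:
  assumes d1: "d1 = d2 * d3 - 1" and d: "2 \<le> d2" "2 \<le> d3" and r: "1 \<le> r" and s: "1 \<le> s"
    and rm: "r \<le> min d2 d3" and sm: "s \<le> min d2 d3"
    and le: "slocc_le d1 d2 d3 (Phi d1 d2 d3 s) (Phi d1 d2 d3 r)"
  shows "s \<le> r"
proof (rule ccontr)
  assume "\<not> s \<le> r" then have rs: "r < s" by simp
  from le obtain L1 L2 L3 where phi: "Phi d1 d2 d3 s = local_op d1 d2 d3 L1 L2 L3 (Phi d1 d2 d3 r)"
    unfolding slocc_le_def by metis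
  have N: "d1 < d2 * d3" using d1 d by (cases "d2 * d3") auto
  have H: "Hyp d2 d3 (Dm s) \<subseteq> SP d1 (Phi d1 d2 d3 s)" using SP_Phi[OF d1 d s] by simp
  obtain L2' where i2: "isinv d2 L2 L2'" using K1_row[OF d s H phi] by blast
  obtain L3' where i3: "isinv d3 L3 L3'" using K1_col[OF d s H phi] by blast
  define \<psi>2 where "\<psi>2 = local_op d1 d2 d3 dlt L2 L3 (Phi d1 d2 d3 r)"
  have sp2: "SP d1 \<psi>2 = Hyp d2 d3 (Dm s)" and bk: "Phi d1 d2 d3 r = local_op d1 d2 d3 dlt L2' L3' \<psi>2"
    using K2[OF N H phi Phi_tensor3 i2 i3] unfolding \<psi>2_def by auto
  define R where "R = gmapT d2 d3 L2' L3' (Dm r)"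
  have R0: "\<forall>Y\<in>Hyp d2 d3 (Dm s). ip d2 d3 R Y = 0"
  proof
    fix Y assume "Y \<in> Hyp d2 d3 (Dm s)"
    then have "Y \<in> SP d1 \<psi>2" using sp2 by simp
    then have "gmap d2 d3 L2' L3' Y \<in> SP d1 (Phi d1 d2 d3 r)" using SP_gmap bk by metis
    then have "gmap d2 d3 L2' L3' Y \<in> Hyp d2 d3 (Dm r)" using SP_Phi[OF d1 d r] by simp
    then have "ip d2 d3 (Dm r) (gmap d2 d3 L2' L3' Y) = 0" unfolding Hyp_def by simp
    then show "ip d2 d3 R Y = 0" unfolding R_def ip_gmap .
  qed
  have d0: "0 < d2" "0 < d3" using d by auto
  have RD: "\<forall>j<d2. \<forall>k<d3. R j k = R 0 0 * Dm s j k" using HI[OF s d0 R0] .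
  have t0: "R 0 0 \<noteq> 0"
  proof
    assume z: "R 0 0 = 0"
    define Y where "Y = gmap d2 d3 L2 L3 (Em 0 0)"
    have "gmap d2 d3 L2' L3' Y = gmap d2 d3 (mm d2 L2' L2) (mm d3 L3' L3) (Em 0 0)"
      unfolding Y_def by (rule gmap_comp)
    also have "\<dots> = gmap d2 d3 dlt dlt (Em 0 0)"
      by (rule gmap_cong) (use i2 i3 in \<open>auto simp: isinv_def\<close>)
    also have "\<dots> = Em 0 0" by (rule gmap_id[OF inbox_Em[OF d0]])
    finally have GY: "gmap d2 d3 L2' L3' Y = Em 0 0" .
    have Rz: "R j k = 0" if "j < d2" "k < d3" for j k
    proof -
      have "R j k = R 0 0 * Dm s j k" using RD that by blast
      then show ?thesis using z by simp
    qed
    have "ip d2 d3 R Y = 0" unfolding ip_def using Rz by (intro sum.neutral) auto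
    then have "ip d2 d3 (Dm r) (Em 0 0) = 0" using GY unfolding R_def ip_gmap[symmetric] by simp
    then show False using d0 r by (simp add: ip_Em Dm_def)
  qed
  have "\<forall>j<s. \<forall>k<s. Dm s j k = (\<Sum>t<r. (L2' t j / R 0 0) * L3' t k)"
  proof (intro allI impI)
    fix j k assume jk: "j < s" "k < s"
    then have jk': "j < d2" "k < d3" using sm by auto
    have "R j k = (\<Sum>b<r. L2' b j * L3' b k)" unfolding R_def using rm by (simp add: gmapT_Dm)
    moreover have "R j k = R 0 0 * Dm s j k" using RD jk' by blast
    ultimately have "R 0 0 * Dm s j k = (\<Sum>b<r. L2' b j * L3' b k)" by simp
    then have "Dm s j k = (\<Sum>b<r. L2' b j * L3' b k) / R 0 0" using t0 by (simp add: field_simps)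
    then show "Dm s j k = (\<Sum>t<r. (L2' t j / R 0 0) * L3' t k)"
      by (simp add: sum_divide_distrib field_simps)
  qed
  then show False using FACT[where P="\<lambda>j t. L2' t j / R 0 0" and Q="\<lambda>t k. L3' t k"] rs by blast
qed

definition eqbox :: "nat \<Rightarrow> nat \<Rightarrow> (nat\<Rightarrow>nat\<Rightarrow>complex) \<Rightarrow> (nat\<Rightarrow>nat\<Rightarrow>complex) \<Rightarrow> bool" where
  "eqbox p q X Y \<longleftrightarrow> (\<forall>j<p. \<forall>k<q. X j k = Y j k)"

lemma eqbox_trans: "eqbox p q X Y \<Longrightarrow> eqbox p q Y Z \<Longrightarrow> eqbox p q X Z"
  unfolding eqbox_def by auto
lemma eqbox_sym: "eqbox p q X Y \<Longrightarrow> eqbox p q Y X"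
  unfolding eqbox_def by auto
lemma eqbox_refl: "eqbox p q X X"
  unfolding eqbox_def by auto

lemma eqbox_mm_left: "eqbox d2 d3 X Y \<Longrightarrow> eqbox p d3 (mm d2 A X) (mm d2 A Y)"
  unfolding eqbox_def mm_def by auto
lemma eqbox_mm_right: "eqbox d2 d3 X Y \<Longrightarrow> eqbox d2 q (mm d3 X B) (mm d3 Y B)"
  unfolding eqbox_def mm_def by auto

lemma isinv_dlt: "isinv d dlt dlt"
  unfolding isinv_def by (simp add: mm_dlt_left)

lemma isinv_mult:
  assumes "isinv d A A'" "isinv d B B'"
  shows "isinv d (mm d A B) (mm d B' A')"
proof -
  have AB: "mm d (mm d X Y) (mm d Y' X') i j = dlt i j"
    if XX: "\<forall>i<d. \<forall>j<d. mm d X X' i j = dlt i j" and YY: "\<forall>i<d. \<forall>j<d. mm d Y Y' i j = dlt i j"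
      and ij: "i < d" "j < d" for X X' Y Y' i j
  proof -
    have "mm d (mm d X Y) (mm d Y' X') i j = mm d X (mm d (mm d Y Y') X') i j" by (simp add: mm_assoc)
    also have "\<dots> = mm d X X' i j"
      unfolding mm_def
    proof (intro sum.cong refl arg_cong2[where f="(*)"])
      fix k assume k: "k \<in> {..<d}"
      have "(\<Sum>l<d. (\<Sum>m<d. Y k m * Y' m l) * X' l j) = (\<Sum>l<d. dlt k l * X' l j)"
        using YY k by (intro sum.cong refl) (auto simp: mm_def)
      also have "\<dots> = X' k j" using k by (simp add: sum_dlt_left)
      finally show "(\<Sum>l<d. (\<Sum>m<d. Y k m * Y' m l) * X' l j) = X' k j" .
    qed
    also have "\<dots> = dlt i j" using XX ij by simp
    finally show ?thesis .
  qed
  show ?thesis using assms unfolding isinv_def by (auto intro: AB)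
qed

definition sw :: "nat \<Rightarrow> nat \<Rightarrow> nat \<Rightarrow> nat" where
  "sw a b x = (if x = a then b else if x = b then a else x)"

lemma sw_sw[simp]: "sw a b (sw a b x) = x" unfolding sw_def by auto
lemma sw_lt: "a < d \<Longrightarrow> b < d \<Longrightarrow> x < d \<Longrightarrow> sw a b x < d" unfolding sw_def by auto

definition Sr :: "nat \<Rightarrow> nat \<Rightarrow> nat \<Rightarrow> nat \<Rightarrow> complex" where
  "Sr a b = (\<lambda>j j'. dlt (sw a b j) j')"
definition Sc :: "nat \<Rightarrow> nat \<Rightarrow> nat \<Rightarrow> nat \<Rightarrow> complex" where
  "Sc a b = (\<lambda>k' k. dlt k' (sw a b k))"

lemma mm_Sr: "a < d \<Longrightarrow> b < d \<Longrightarrow> j < d \<Longrightarrow> mm d (Sr a b) X j k = X (sw a b j) k"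
  unfolding mm_def Sr_def by (simp add: sum_dlt_left sw_lt)
lemma mm_Sc: "a < d \<Longrightarrow> b < d \<Longrightarrow> k < d \<Longrightarrow> mm d X (Sc a b) j k = X j (sw a b k)"
  unfolding mm_def Sc_def by (simp add: sum_dlt_right sw_lt)

lemma isinv_Sr: "a < d \<Longrightarrow> b < d \<Longrightarrow> isinv d (Sr a b) (Sr a b)"
  unfolding isinv_def by (simp add: mm_Sr sw_lt) (simp add: Sr_def)
lemma isinv_Sc: "a < d \<Longrightarrow> b < d \<Longrightarrow> isinv d (Sc a b) (Sc a b)"
  unfolding isinv_def by (simp add: mm_Sc sw_lt) (simp add: Sc_def)

definition ColR :: "nat \<Rightarrow> (nat \<Rightarrow> complex) \<Rightarrow> nat \<Rightarrow> nat \<Rightarrow> complex" where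
  "ColR s c = (\<lambda>j j'. if j' = s then c j else dlt j j')"
definition RowR :: "nat \<Rightarrow> (nat \<Rightarrow> complex) \<Rightarrow> nat \<Rightarrow> nat \<Rightarrow> complex" where
  "RowR s r = (\<lambda>k' k. if k' = s then r k else dlt k' k)"

lemma sum_remove_s: "s < (d::nat) \<Longrightarrow> (\<Sum>j<d. f j) = f s + (\<Sum>j\<in>{..<d}-{s}. f j)"
  using sum.remove[of "{..<d}" s f] by simp

lemma mm_ColR:
  assumes "s < d"
  shows "mm d (ColR s c) X j k = (if j = s then 0 else if j < d then X j k else 0) + c j * X s k"
proof -
  have "mm d (ColR s c) X j k = c j * X s k + (\<Sum>j'\<in>{..<d}-{s}. dlt j j' * X j' k)"
    unfolding mm_def ColR_def using assms
    by (subst sum_remove_s[OF assms]) (auto intro!: sum.cong)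
  also have "(\<Sum>j'\<in>{..<d}-{s}. dlt j j' * X j' k) = (if j = s then 0 else if j < d then X j k else 0)"
    by (simp add: dlt_mult_l)
  finally show ?thesis by simp
qed

lemma mm_RowR:
  assumes "s < d"
  shows "mm d X (RowR s r) j k = (if k = s then 0 else if k < d then X j k else 0) + X j s * r k"
proof -
  have "mm d X (RowR s r) j k = X j s * r k + (\<Sum>k'\<in>{..<d}-{s}. X j k' * dlt k' k)"
    unfolding mm_def RowR_def using assms
    by (subst sum_remove_s[OF assms]) (auto intro!: sum.cong)
  also have "(\<Sum>k'\<in>{..<d}-{s}. X j k' * dlt k' k) = (if k = s then 0 else if k < d then X j k else 0)"
    by (simp add: dlt_mult_r)
  finally show ?thesis by simp
qed

definition cinv :: "nat \<Rightarrow> (nat \<Rightarrow> complex) \<Rightarrow> nat \<Rightarrow> complex" where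
  "cinv s c = (\<lambda>j. if j = s then 1 / c s else - c j / c s)"

lemma isinv_ColR:
  assumes "s < d" "c s \<noteq> 0"
  shows "isinv d (ColR s c) (ColR s (cinv s c))"
  unfolding isinv_def mm_ColR[OF assms(1)]
  using assms by (auto simp: ColR_def cinv_def dlt_def field_simps)

lemma isinv_RowR:
  assumes "s < d" "r s \<noteq> 0"
  shows "isinv d (RowR s r) (RowR s (cinv s r))"
  unfolding isinv_def mm_RowR[OF assms(1)]
  using assms by (auto simp: RowR_def cinv_def dlt_def field_simps)

lemma NF_step_A:
  assumes blk: "\<forall>j<d2. \<forall>k<d3. (j < s \<or> k < s) \<longrightarrow> M j k = Dm s j k"
    and zero: "\<forall>j<d2. \<forall>k<d3. s \<le> j \<longrightarrow> s \<le> k \<longrightarrow> M j k = 0"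
  shows "eqbox d2 d3 (mm d3 (mm d2 dlt (Dm s)) dlt) M"
  unfolding eqbox_def
proof (intro allI impI)
  fix j k assume jk: "j < d2" "k < d3"
  have "mm d3 (mm d2 dlt (Dm s)) dlt j k = Dm s j k" using jk by (simp add: mm_dlt_left mm_dlt_right)
  also have "\<dots> = M j k"
  proof (cases "j < s \<or> k < s")
    case True then show ?thesis using blk jk by metis
  next
    case False then show ?thesis using zero jk by (simp add: Dm_def)
  qed
  finally show "mm d3 (mm d2 dlt (Dm s)) dlt j k = M j k" .
qed

lemma NFs:
  "\<And>s M. n = min d2 d3 - s \<Longrightarrow> (\<forall>j<d2. \<forall>k<d3. (j < s \<or> k < s) \<longrightarrow> M j k = Dm s j k) \<Longrightarrow> s \<le> min d2 d3 \<Longrightarrow>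
   \<exists>r P P' Q Q'. s \<le> r \<and> r \<le> min d2 d3 \<and> isinv d2 P P' \<and> isinv d3 Q Q' \<and>
     eqbox d2 d3 (mm d3 (mm d2 P (Dm r)) Q) M"
proof (induction n rule: less_induct)
  case (less n s M)
  note blk = less.prems(2)
  show ?case
  proof (cases "\<forall>j<d2. \<forall>k<d3. s \<le> j \<longrightarrow> s \<le> k \<longrightarrow> M j k = 0")
    case True
    show ?thesis
      using NF_step_A[OF blk True] isinv_dlt less.prems(3) by blast
  next
    case False
    then obtain j0 k0 where j0: "s \<le> j0" "j0 < d2" and k0: "s \<le> k0" "k0 < d3" and nz: "M j0 k0 \<noteq> 0"
      by auto
    have sd: "s < d2" "s < d3" using j0 k0 by auto
    define M1 where "M1 j k = M (sw s j0 j) (sw s k0 k)" for j k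
    define a where "a = M1 s s"
    have a: "a \<noteq> 0" using nz unfolding a_def M1_def sw_def by simp
    define M2 where "M2 j k = (if j = s \<or> k = s then dlt j k else M1 j k - M1 j s * M1 s k / a)" for j k
    have blk1: "M1 j k = Dm s j k" if "j < d2" "k < d3" "j < s \<or> k < s" for j k
    proof (cases "j < s")
      case True
      have "sw s j0 j = j" using True j0 unfolding sw_def by auto
      moreover have "sw s k0 k < d3" using sw_lt sd k0 that by blast
      ultimately have "M1 j k = Dm s j (sw s k0 k)" using blk True that unfolding M1_def by auto
      moreover have "(sw s k0 k = j) = (k = j)" using True k0 unfolding sw_def by auto
      ultimately show ?thesis unfolding Dm_def by auto
    next
      case False
      then have ks: "k < s" using that by auto
      have "sw s k0 k = k" using ks k0 unfolding sw_def by auto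
      moreover have "sw s j0 j < d2" using sw_lt sd j0 that by blast
      ultimately have "M1 j k = Dm s (sw s j0 j) k" using blk ks that unfolding M1_def by auto
      moreover have "(sw s j0 j = k) = (j = k)" using ks j0 unfolding sw_def by auto
      ultimately show ?thesis unfolding Dm_def by auto
    qed
    have blk2: "\<forall>j<d2. \<forall>k<d3. (j < Suc s \<or> k < Suc s) \<longrightarrow> M2 j k = Dm (Suc s) j k"
    proof (intro allI impI)
      fix j k assume jk: "j < d2" "k < d3" and c: "j < Suc s \<or> k < Suc s"
      show "M2 j k = Dm (Suc s) j k"
      proof (cases "j = s \<or> k = s")
        case True then show ?thesis unfolding M2_def Dm_def dlt_def by auto
      next
        case False
        then have c': "j < s \<or> k < s" using c by auto
        have "M1 j s * M1 s k = 0"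
        proof (cases "j < s")
          case True then have "M1 j s = Dm s j s" using blk1 jk sd by auto
          then show ?thesis using True by (simp add: Dm_def)
        next
          case False then have "k < s" using c' by auto
          then have "M1 s k = Dm s s k" using blk1 jk sd by auto
          then show ?thesis using \<open>k < s\<close> by (simp add: Dm_def)
        qed
        then have "M2 j k = M1 j k" using False unfolding M2_def by simp
        also have "\<dots> = Dm s j k" using blk1 jk c' by auto
        also have "\<dots> = Dm (Suc s) j k" using c' False unfolding Dm_def by auto
        finally show ?thesis .
      qed
    qed
    have lt: "min d2 d3 - Suc s < n" using less.prems(1) sd by auto
    obtain r P2 P2' Q2 Q2' where r: "Suc s \<le> r" "r \<le> min d2 d3" and iP2: "isinv d2 P2 P2'"
      and iQ2: "isinv d3 Q2 Q2'" and e2: "eqbox d2 d3 (mm d3 (mm d2 P2 (Dm r)) Q2) M2"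
      using less.IH[OF lt refl blk2] sd by auto
    define c where "c j = M1 j s" for j
    define rr where "rr k = M1 s k / a" for k
    have cs: "c s \<noteq> 0" using a unfolding c_def a_def .
    have rs: "rr s \<noteq> 0" using a unfolding rr_def a_def by simp
    have e1: "eqbox d2 d3 (mm d3 (mm d2 (ColR s c) M2) (RowR s rr)) M1"
      unfolding eqbox_def
    proof (intro allI impI)
      fix j k assume jk: "j < d2" "k < d3"
      show "mm d3 (mm d2 (ColR s c) M2) (RowR s rr) j k = M1 j k"
        using jk a unfolding mm_RowR[OF sd(2)] mm_ColR[OF sd(1)]
        by (auto simp: M2_def c_def rr_def dlt_def a_def field_simps)
    qed
    have e0: "eqbox d2 d3 (mm d3 (mm d2 (Sr s j0) M1) (Sc s k0)) M"
      unfolding eqbox_def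
    proof (intro allI impI)
      fix j k assume jk: "j < d2" "k < d3"
      show "mm d3 (mm d2 (Sr s j0) M1) (Sc s k0) j k = M j k"
        using jk sd j0 k0 by (simp add: mm_Sc mm_Sr M1_def)
    qed
    define P where "P = mm d2 (mm d2 (Sr s j0) (ColR s c)) P2"
    define P' where "P' = mm d2 P2' (mm d2 (ColR s (cinv s c)) (Sr s j0))"
    define Q where "Q = mm d3 (mm d3 Q2 (RowR s rr)) (Sc s k0)"
    define Q' where "Q' = mm d3 (Sc s k0) (mm d3 (RowR s (cinv s rr)) Q2')"
    have iP: "isinv d2 P P'" unfolding P_def P'_def
      by (intro isinv_mult iP2 isinv_Sr isinv_ColR sd j0 cs)
    have iQ: "isinv d3 Q Q'" unfolding Q_def Q'_def
      by (intro isinv_mult iQ2 isinv_Sc isinv_RowR sd k0 rs)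
    have "mm d3 (mm d2 P (Dm r)) Q =
          mm d3 (mm d2 (Sr s j0) (mm d3 (mm d2 (ColR s c) (mm d3 (mm d2 P2 (Dm r)) Q2)) (RowR s rr))) (Sc s k0)"
      unfolding P_def Q_def by (simp add: mm_assoc)
    moreover have "eqbox d2 d3
       (mm d3 (mm d2 (Sr s j0) (mm d3 (mm d2 (ColR s c) (mm d3 (mm d2 P2 (Dm r)) Q2)) (RowR s rr))) (Sc s k0))
       (mm d3 (mm d2 (Sr s j0) (mm d3 (mm d2 (ColR s c) M2) (RowR s rr))) (Sc s k0))"
      by (intro eqbox_mm_right eqbox_mm_left e2)
    moreover have "eqbox d2 d3 (mm d3 (mm d2 (Sr s j0) (mm d3 (mm d2 (ColR s c) M2) (RowR s rr))) (Sc s k0))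
       (mm d3 (mm d2 (Sr s j0) M1) (Sc s k0))"
      by (intro eqbox_mm_right eqbox_mm_left e1)
    ultimately have "eqbox d2 d3 (mm d3 (mm d2 P (Dm r)) Q) M"
      using e0 eqbox_trans by metis
    then show ?thesis using iP iQ r by (intro exI[of _ r] exI[of _ P] exI[of _ P'] exI[of _ Q] exI[of _ Q']) auto
  qed
qed

lemma NF:
  assumes "\<exists>j<d2. \<exists>k<d3. M j k \<noteq> 0"
  shows "\<exists>r P P' Q Q'. 1 \<le> r \<and> r \<le> min d2 d3 \<and> isinv d2 P P' \<and> isinv d3 Q Q' \<and>
     eqbox d2 d3 (mm d3 (mm d2 P (Dm r)) Q) M"
proof -
  obtain r P P' Q Q' where h: "r \<le> min d2 d3" "isinv d2 P P'" "isinv d3 Q Q'"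
    "eqbox d2 d3 (mm d3 (mm d2 P (Dm r)) Q) M"
    using NFs[of "min d2 d3 - 0" d2 d3 0 M] by auto
  have "r \<noteq> 0"
  proof
    assume "r = 0"
    then have "\<forall>j<d2. \<forall>k<d3. M j k = 0" using h(4) unfolding eqbox_def mm_def Dm_def by auto
    then show False using assms by auto
  qed
  then show ?thesis using h by (intro exI[of _ r]) auto
qed

lemma ip_cong1: "eqbox d2 d3 M M' \<Longrightarrow> ip d2 d3 M X = ip d2 d3 M' X"
  unfolding ip_def eqbox_def by (auto intro!: sum.cong)

lemma inbox_gmap: "inbox d2 d3 (gmap d2 d3 A B X)"
  unfolding inbox_def gmap_def by auto

lemma maximal_to_Phi:
  assumes d1: "d1 = d2 * d3 - 1" and d: "2 \<le> d2" "2 \<le> d3"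
    and mx: "slocc_maximal d1 d2 d3 \<phi>"
  shows "\<exists>r. 1 \<le> r \<and> r \<le> min d2 d3 \<and> slocc_le d1 d2 d3 \<phi> (Phi d1 d2 d3 r) \<and> slocc_le d1 d2 d3 (Phi d1 d2 d3 r) \<phi>"
proof -
  have phi: "\<phi> \<in> tensor3 d1 d2 d3" using mx unfolding slocc_maximal_def by simp
  have N: "d1 < d2 * d3" using d1 d by (cases "d2 * d3") auto
  obtain M where M: "inbox d2 d3 M" "\<exists>j<d2. \<exists>k<d3. M j k \<noteq> 0" "\<forall>i<d1. ip d2 d3 M (\<phi> i) = 0"
    using F1[OF phi N] by blast
  obtain r P P' Q Q' where r: "1 \<le> r" "r \<le> min d2 d3" and iP: "isinv d2 P P'" and iQ: "isinv d3 Q Q'"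
    and e: "eqbox d2 d3 (mm d3 (mm d2 P (Dm r)) Q) M"
    using NF[OF M(2)] by blast
  define A where "A = (\<lambda>i j. P j i)"
  define A' where "A' = (\<lambda>i j. P' j i)"
  define \<phi>1 where "\<phi>1 = local_op d1 d2 d3 dlt A Q \<phi>"
  have gT: "eqbox d2 d3 (gmapT d2 d3 A Q (Dm r)) M"
  proof -
    have "gmapT d2 d3 A Q (Dm r) = mm d3 (mm d2 P (Dm r)) Q"
      unfolding gmapT_def mm_def A_def
      by (intro ext) (subst sum.swap, simp add: sum_distrib_right sum_distrib_left mult_ac)
    then show ?thesis using e by simp
  qed
  have "slocc_le d1 d2 d3 \<phi>1 (Phi d1 d2 d3 r)"
  proof (rule F3)
    show "\<phi>1 \<in> tensor3 d1 d2 d3" unfolding \<phi>1_def by (rule local_op_tensor3)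
    show "\<forall>a<d1. \<phi>1 a \<in> SP d1 (Phi d1 d2 d3 r)"
    proof (intro allI impI)
      fix a assume a: "a < d1"
      have sl: "\<phi>1 a = gmap d2 d3 A Q (\<phi> a)" unfolding \<phi>1_def using a by (rule slice_local_dlt)
      have "ip d2 d3 (Dm r) (\<phi>1 a) = ip d2 d3 M (\<phi> a)"
        unfolding sl ip_gmap by (rule ip_cong1[OF gT])
      then have "\<phi>1 a \<in> Hyp d2 d3 (Dm r)" using M(3) a sl inbox_gmap unfolding Hyp_def by simp
      then show "\<phi>1 a \<in> SP d1 (Phi d1 d2 d3 r)" using SP_Phi[OF d1 d r(1)] by simp
    qed
  qed
  moreover have "slocc_le d1 d2 d3 \<phi> \<phi>1"
  proof -
    have "local_op d1 d2 d3 dlt A' Q' \<phi>1 = local_op d1 d2 d3 (mm d1 dlt dlt) (mm d2 A' A) (mm d3 Q' Q) \<phi>"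
      unfolding \<phi>1_def by (rule local_op_comp)
    also have "\<dots> = local_op d1 d2 d3 dlt dlt dlt \<phi>"
    proof (rule local_op_cong)
      show "mm d1 dlt dlt i j = dlt i j" if "i < d1" "j < d1" for i j using that by (simp add: mm_dlt_left)
      show "mm d2 A' A i j = dlt i j" if "i < d2" "j < d2" for i j
        using iP that unfolding isinv_def A_def A'_def mm_def by (simp add: mult.commute dlt_sym)
      show "mm d3 Q' Q i j = dlt i j" if "i < d3" "j < d3" for i j
        using iQ that unfolding isinv_def by simp
    qed
    also have "\<dots> = \<phi>" using local_op_id[OF phi] .
    finally show ?thesis unfolding slocc_le_def by metis
  qed
  ultimately have le1: "slocc_le d1 d2 d3 \<phi> (Phi d1 d2 d3 r)" using slocc_le_trans by blast
  then have "slocc_le d1 d2 d3 (Phi d1 d2 d3 r) \<phi>"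
    using mx Phi_tensor3 unfolding slocc_maximal_def by blast
  then show ?thesis using le1 r by blast
qed

lemma equiv_rel:
  "equiv (maximal_states d1 d2 d3) (slocc_equiv_rel d1 d2 d3)"
proof (rule equivI)
  show "refl_on (maximal_states d1 d2 d3) (slocc_equiv_rel d1 d2 d3)"
    unfolding refl_on_def slocc_equiv_rel_def slocc_equiv_def maximal_states_def slocc_maximal_def
    using slocc_le_refl by auto
  show "sym (slocc_equiv_rel d1 d2 d3)"
    unfolding sym_def slocc_equiv_rel_def slocc_equiv_def by auto
  show "trans (slocc_equiv_rel d1 d2 d3)"
    unfolding trans_def slocc_equiv_rel_def slocc_equiv_def using slocc_le_trans by blast
  show "slocc_equiv_rel d1 d2 d3 \<subseteq> maximal_states d1 d2 d3 \<times> maximal_states d1 d2 d3"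
    unfolding slocc_equiv_rel_def by auto
qed

theorem mainTheorem6:
  fixes d1 d2 d3 :: nat
  assumes "d2 \<ge> 2" and "d3 \<ge> 2" and "d1 = d2 * d3 - 1"
  shows "finite (maximal_states d1 d2 d3 // slocc_equiv_rel d1 d2 d3) \<and>
         card (maximal_states d1 d2 d3 // slocc_equiv_rel d1 d2 d3) = min d2 d3"
proof -
  let ?A = "maximal_states d1 d2 d3"
  let ?R = "slocc_equiv_rel d1 d2 d3"
  define cls where "cls r = ?R `` {Phi d1 d2 d3 r}" for r
  have eq: "equiv ?A ?R" by (rule equiv_rel)
  have PhiA: "Phi d1 d2 d3 r \<in> ?A" if "1 \<le> r" for r
    using Phi_maximal[OF assms(3) assms(1) assms(2) that] unfolding maximal_states_def by simp
  have Q: "?A // ?R = cls ` {1..min d2 d3}"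
  proof
    show "?A // ?R \<subseteq> cls ` {1..min d2 d3}"
    proof
      fix X assume "X \<in> ?A // ?R"
      then obtain \<phi> where \<phi>: "\<phi> \<in> ?A" and X: "X = ?R `` {\<phi>}" by (rule quotientE)
      obtain r where r: "1 \<le> r" "r \<le> min d2 d3" "slocc_le d1 d2 d3 \<phi> (Phi d1 d2 d3 r)"
        "slocc_le d1 d2 d3 (Phi d1 d2 d3 r) \<phi>"
        using maximal_to_Phi[OF assms(3) assms(1) assms(2)] \<phi> unfolding maximal_states_def by blast
      have "(\<phi>, Phi d1 d2 d3 r) \<in> ?R"
        using \<phi> PhiA[OF r(1)] r(3,4) unfolding slocc_equiv_rel_def slocc_equiv_def by simp
      then have "X = cls r" unfolding X cls_def by (rule equiv_class_eq[OF eq])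
      then show "X \<in> cls ` {1..min d2 d3}" using r by auto
    qed
    show "cls ` {1..min d2 d3} \<subseteq> ?A // ?R"
      unfolding cls_def using PhiA by (auto intro: quotientI)
  qed
  have inj: "inj_on cls {1..min d2 d3}"
  proof (rule inj_onI)
    fix r s assume r: "r \<in> {1..min d2 d3}" and s: "s \<in> {1..min d2 d3}" and e: "cls r = cls s"
    have "(Phi d1 d2 d3 r, Phi d1 d2 d3 s) \<in> ?R"
      using e eq_equiv_class_iff[OF eq PhiA PhiA] r s unfolding cls_def by auto
    then have le: "slocc_le d1 d2 d3 (Phi d1 d2 d3 r) (Phi d1 d2 d3 s)" "slocc_le d1 d2 d3 (Phi d1 d2 d3 s) (Phi d1 d2 d3 r)"
      unfolding slocc_equiv_rel_def slocc_equiv_def by auto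
    have "r \<le> s" using Phi_distinct[OF assms(3) assms(1) assms(2) _ _ _ _ le(1)] r s by auto
    moreover have "s \<le> r" using Phi_distinct[OF assms(3) assms(1) assms(2) _ _ _ _ le(2)] r s by auto
    ultimately show "r = s" by simp
  qed
  show ?thesis unfolding Q using card_image[OF inj] by simp
qed

end
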